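(* Let $T$ be a string of length $N$ and let $z$ be the size of its LZ77 factorization. The number of letters (variables) of the run-length straight-line program $\mathsf{TtoG}(T)$ is $O(z \lg (N/z))$.
   Context: Construction $\mathsf{TtoG}$: Let $T_0$ be obtained from $T$ by replacing each character by a letter deriving it. For $h=0,1,\ldots$ until $|T_h|=1$: if $h$ is even, replace every maximal run $c^d$ ($d\ge2$) of $T_h$ by a fresh letter with rule $\to c^d$ (equal $(c,d)$ get the same letter). If $h$ is odd, compute a partition $(L_h,R_h)$ of the letters of $T_h$: process letters $c$ in increasing order, adding $c$ to $L_h$ if the number of occurrences in $T_h$ of length-2 substrings made of $c$ and a letter already in $R_h$ (either order) is at least the number with a letter already in $L_h$, else to $R_h$; finally swap $L_h,R_h$ if occurrences of pairs in $L_hR_h$ are fewer than those in $R_hL_h$. Replace every occurrence of a pair $ab$ with $a\in L_h$, $b\in R_h$ by a fresh letter with rule $\to ab$ (equal pairs get the same letter). All letters created, with their rules, form $\mathsf{TtoG}(T)$. The LZ77 factorization (without self-reference) of $T$ is $T=f_1\cdots f_z$ where, with $p_i=|f_1\cdots f_{i-1}|+1$, $f_i=T[p_i]$ if $T[p_i]$ does not occur in $T[1..p_i-1]$, and otherwise $f_i$ is the longest prefix of $T[p_i..N]$ occurring in $T[1..p_i-1]$. *)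

theory Defs
  imports Complex_Main "HOL-Library.Sublist"
begin

text \<open>At position p (0-indexed, i.e. p+1 in the paper),
  the phrase has length 1 if T!p does not occur in T[0..p-1], otherwise it is the
  length of the longest prefix of drop p T that occurs (as a contiguous substring)
  in take p T.\<close>

definition lz_len :: "'a list \<Rightarrow> nat \<Rightarrow> nat" where
  "lz_len T p =
     (if T ! p \<notin> set (take p T) then 1
      else (GREATEST l. l \<le> length T - p \<and> sublist (take l (drop p T)) (take p T)))"

text \<open>Number of phrases of the LZ77 factorization of drop p T.  (The max 1 only
  makes termination syntactically obvious; lz_len is always at least 1.)\<close>
function lz_count :: "'a list \<Rightarrow> nat \<Rightarrow> nat" where
  "lz_count T p = (if length T \<le> p then 0 else Suc (lz_count T (p + max 1 (lz_len T p))))"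
  by pat_completeness auto
termination by (relation "measure (\<lambda>(T, p). length T - p)") auto

definition lz77_size :: "'a list \<Rightarrow> nat" where
  "lz77_size T = lz_count T 0"

text \<open>Letters: a letter deriving a character, a run letter created at level h with
  rule c^d, or a pair letter created at level h with rule ab.  The level tag makes
  letters created at different levels fresh.\<close>
datatype 'a sym = Chr 'a | Run nat "'a sym" nat | Pr nat "'a sym" "'a sym"

function run_compress :: "nat \<Rightarrow> 'a sym list \<Rightarrow> 'a sym list" where
  "run_compress h [] = []"
| "run_compress h (x # xs) =
     (let k = length (takeWhile (\<lambda>y. y = x) xs)
      in (if k = 0 then x else Run h x (Suc k)) # run_compress h (dropWhile (\<lambda>y. y = x) xs))"
  by pat_completeness auto
termination
  by (relation "measure (\<lambda>(h, xs). length xs)") (auto simp: le_imp_less_Suc length_dropWhile_le)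

definition adj_pairs :: "'b list \<Rightarrow> ('b \<times> 'b) list" where
  "adj_pairs xs = zip xs (tl xs)"

definition pair_cnt :: "'b list \<Rightarrow> 'b \<Rightarrow> 'b set \<Rightarrow> nat" where
  "pair_cnt xs c S = length (filter (\<lambda>(a, b). (a = c \<and> b \<in> S) \<or> (b = c \<and> a \<in> S)) (adj_pairs xs))"

definition dir_cnt :: "'b list \<Rightarrow> 'b set \<Rightarrow> 'b set \<Rightarrow> nat" where
  "dir_cnt xs A B = length (filter (\<lambda>(a, b). a \<in> A \<and> b \<in> B) (adj_pairs xs))"

definition greedy_step :: "'b list \<Rightarrow> 'b \<Rightarrow> 'b set \<times> 'b set \<Rightarrow> 'b set \<times> 'b set" where
  "greedy_step xs c LR =
     (let (L, R) = LR in
      if pair_cnt xs c R \<ge> pair_cnt xs c L then (insert c L, R) else (L, insert c R))"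

definition partition_LR :: "('b \<Rightarrow> nat) \<Rightarrow> 'b list \<Rightarrow> 'b set \<times> 'b set" where
  "partition_LR rk xs =
     (let (L, R) = fold (greedy_step xs) (sort_key rk (remdups xs)) ({}, {})
      in if dir_cnt xs L R < dir_cnt xs R L then (R, L) else (L, R))"

fun pair_replace :: "nat \<Rightarrow> 'a sym set \<Rightarrow> 'a sym set \<Rightarrow> 'a sym list \<Rightarrow> 'a sym list" where
  "pair_replace h L R (a # b # xs) =
     (if a \<in> L \<and> b \<in> R then Pr h a b # pair_replace h L R xs
      else a # pair_replace h L R (b # xs))"
| "pair_replace h L R xs = xs"

definition ttog_step :: "('a sym \<Rightarrow> nat) \<Rightarrow> nat \<Rightarrow> 'a sym list \<Rightarrow> 'a sym list" where
  "ttog_step rk h xs =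
     (if even h then run_compress h xs
      else (let (L, R) = partition_LR rk xs in pair_replace h L R xs))"

fun ttog_level :: "('a sym \<Rightarrow> nat) \<Rightarrow> 'a list \<Rightarrow> nat \<Rightarrow> 'a sym list" where
  "ttog_level rk T 0 = map Chr T"
| "ttog_level rk T (Suc h) = ttog_step rk h (ttog_level rk T h)"

text \<open>All letters of TtoG(T): the letters of every T_h reached before the loop stops
  (i.e. all T_h such that no earlier T_h' has length 1).\<close>
definition ttog_letters :: "('a sym \<Rightarrow> nat) \<Rightarrow> 'a list \<Rightarrow> 'a sym set" where
  "ttog_letters rk T =
     (\<Union> h \<in> {h. \<forall>h' < h. length (ttog_level rk T h') \<noteq> 1}. set (ttog_level rk T h))"

end

theory Submission
  imports Defs
begin


definition st :: "'b list list \<Rightarrow> nat \<Rightarrow> nat" where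
  "st gs j = length (concat (take j gs))"

definition nb :: "'b list list \<Rightarrow> nat \<Rightarrow> nat" where
  "nb gs u = card {j. j < length gs \<and> st gs j < u}"

definition starts :: "'b list list \<Rightarrow> nat set" where
  "starts gs = {st gs j | j. j < length gs}"

definition nonemp :: "'b list list \<Rightarrow> bool" where
  "nonemp gs = (\<forall>g\<in>set gs. g \<noteq> [])"

lemma st_0[simp]: "st gs 0 = 0" by (simp add: st_def)

lemma st_Suc: "j < length gs \<Longrightarrow> st gs (Suc j) = st gs j + length (gs!j)"
  by (simp add: st_def take_Suc_conv_app_nth)

lemma st_mono: "i \<le> j \<Longrightarrow> st gs i \<le> st gs j"
proof -
  assume "i \<le> j"
  then have "take i gs = take i (take j gs)" by (simp add: min_def)
  then obtain r where "take j gs = take i gs @ r"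
    by (metis append_take_drop_id)
  then show ?thesis by (simp add: st_def)
qed

lemma st_len: "k \<ge> length gs \<Longrightarrow> st gs k = length (concat gs)"
  by (simp add: st_def)

lemma st_strict: assumes "nonemp gs" "i < j" "j \<le> length gs" shows "st gs i < st gs j"
proof -
  have "st gs i \<le> st gs (j - 1)" using assms by (intro st_mono) auto
  moreover have "st gs j = st gs (j-1) + length (gs!(j-1))"
    using st_Suc[of "j-1" gs] assms by auto
  moreover have "gs!(j-1) \<noteq> []" using assms unfolding nonemp_def
    by (metis One_nat_def Suc_le_eq Suc_pred gr_implies_not0 linorder_neqE_nat nth_mem)
  ultimately show ?thesis by (cases "gs!(j-1)") auto
qed

lemma downclosed_eq:
  fixes S :: "nat set"
  assumes "finite S" "\<And>j i. j \<in> S \<Longrightarrow> i < j \<Longrightarrow> i \<in> S"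
  shows "S = {..<card S}"
proof (cases "S = {}")
  case True then show ?thesis by simp
next
  case False
  let ?m = "Max S"
  have "?m \<in> S" using assms False by simp
  have "S = {..?m}"
  proof
    show "S \<subseteq> {..?m}" using assms by auto
    show "{..?m} \<subseteq> S"
    proof
      fix i assume "i \<in> {..?m}"
      then have "i = ?m \<or> i < ?m" by auto
      then show "i \<in> S" using \<open>?m \<in> S\<close> assms(2) by auto
    qed
  qed
  then obtain m where "S = {..m}" by blast
  then show ?thesis by (simp add: lessThan_Suc_atMost)
qed

lemma nb_set: assumes "nonemp gs"
  shows "{j. j < length gs \<and> st gs j < u} = {..<nb gs u}"
proof -
  have "{j. j < length gs \<and> st gs j < u} = {..<card {j. j < length gs \<and> st gs j < u}}"
  proof (rule downclosed_eq)
    fix j i assume "j \<in> {j. j < length gs \<and> st gs j < u}" "i < j"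
    then show "i \<in> {j. j < length gs \<and> st gs j < u}"
      using st_strict[OF assms, of i j] by auto
  qed auto
  then show ?thesis by (simp add: nb_def)
qed

lemma nb_le: "nb gs u \<le> length gs"
proof -
  have "{j. j < length gs \<and> st gs j < u} \<subseteq> {..<length gs}" by auto
  then show ?thesis unfolding nb_def by (metis card_lessThan card_mono finite_lessThan)
qed

lemma nb_iff: assumes "nonemp gs" "j < length gs"
  shows "j < nb gs u \<longleftrightarrow> st gs j < u"
  using nb_set[OF assms(1), of u] assms(2) by blast

lemma nb_iff': assumes "nonemp gs"
  shows "j < nb gs u \<longleftrightarrow> j < length gs \<and> st gs j < u"
  using nb_set[OF assms(1), of u] by blast

lemma nb_mono: assumes "u \<le> v" shows "nb gs u \<le> nb gs v"
proof -
  have "{j. j < length gs \<and> st gs j < u} \<subseteq> {j. j < length gs \<and> st gs j < v}" using assms by auto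
  then show ?thesis unfolding nb_def by (intro card_mono) auto
qed

lemma nb_st: assumes "nonemp gs" "k \<le> length gs" shows "nb gs (st gs k) = k"
proof -
  have "j < nb gs (st gs k) \<longleftrightarrow> j < k" for j
    using nb_iff'[OF assms(1)] st_strict[OF assms(1)] st_mono assms(2)
    by (metis le_less_trans linorder_not_le order.strict_trans1)
  then show ?thesis by (metis linorder_neqE_nat less_irrefl)
qed

lemma nb_0[simp]: "nb gs 0 = 0" by (simp add: nb_def)

lemma nb_total: assumes "nonemp gs" shows "nb gs (length (concat gs)) = length gs"
  using nb_st[OF assms, of "length gs"] by (simp add: st_len)

lemma sum_len_st: assumes "A \<le> B" "B \<le> length gs"
  shows "(\<Sum>j\<in>{A..<B}. length (gs!j)) = st gs B - st gs A"
  using assms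
proof (induction B)
  case 0 then show ?case by simp
next
  case (Suc B)
  show ?case
  proof (cases "A = Suc B")
    case True then show ?thesis by simp
  next
    case False
    then have "A \<le> B" using Suc by simp
    then have "(\<Sum>j\<in>{A..<Suc B}. length (gs!j)) = (\<Sum>j\<in>{A..<B}. length (gs!j)) + length (gs!B)"
      by simp
    also have "\<dots> = st gs B - st gs A + length (gs!B)" using Suc \<open>A \<le> B\<close> by simp
    also have "\<dots> = st gs (Suc B) - st gs A"
      using st_Suc[of B gs] Suc st_mono[OF \<open>A \<le> B\<close>, of gs] by simp
    finally show ?thesis .
  qed
qed

lemma sum_min_interval:
  assumes "nonemp gs" "u \<le> v"
  shows "(\<Sum>j\<in>{nb gs u..<nb gs v}. min (length (gs!j)) 2) \<le> v - u + 1"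
proof (cases "nb gs v \<le> nb gs u")
  case True then show ?thesis by simp
next
  case False
  define A where "A = nb gs u"
  define J where "J = nb gs v - 1"
  have AJ: "A \<le> J" "J < nb gs v" using False by (auto simp: A_def J_def)
  have Jl: "J < length gs" using AJ nb_le[of gs v] by simp
  have Al: "A < length gs" using AJ Jl by simp
  have stJ: "st gs J < v" using nb_iff[OF assms(1) Jl] AJ by simp
  have stA: "st gs A \<ge> u" using nb_iff[OF assms(1) Al, of u] by (simp add: A_def)
  have "{nb gs u..<nb gs v} = insert J {A..<J}" using AJ by (auto simp: A_def J_def)
  then have "(\<Sum>j\<in>{nb gs u..<nb gs v}. min (length (gs!j)) 2)
      = min (length (gs!J)) 2 + (\<Sum>j\<in>{A..<J}. min (length (gs!j)) 2)" by simp
  also have "\<dots> \<le> 2 + (\<Sum>j\<in>{A..<J}. length (gs!j))"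
    by (intro add_mono sum_mono) auto
  also have "\<dots> = 2 + (st gs J - st gs A)" using sum_len_st[OF AJ(1), of gs] Jl by simp
  also have "\<dots> \<le> v - u + 1" using stJ stA st_mono[OF AJ(1), of gs] by linarith
  finally show ?thesis .
qed


definition elen :: "('s \<Rightarrow> nat) \<Rightarrow> 's list \<Rightarrow> nat" where
  "elen wt xs = sum_list (map wt xs)"

lemma elen_append[simp]: "elen wt (xs @ ys) = elen wt xs + elen wt ys"
  by (simp add: elen_def)

lemma elen_take_mono: "i \<le> j \<Longrightarrow> elen wt (take i xs) \<le> elen wt (take j xs)"
proof -
  assume "i \<le> j"
  then have "take j xs = take i xs @ take (j - i) (drop i xs)"
    by (metis le_add_diff_inverse take_add)
  then show ?thesis by simp
qed

lemma elen_take_less: "elen wt (take i xs) < elen wt (take j xs) \<Longrightarrow> i < j"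
  using elen_take_mono[of j i wt xs] by (meson not_le)

definition valid :: "('s \<Rightarrow> nat) \<Rightarrow> 's list \<Rightarrow> nat \<Rightarrow> (nat\<Rightarrow>nat) \<Rightarrow> (nat\<Rightarrow>nat) \<Rightarrow> (nat\<Rightarrow>nat) \<Rightarrow> (nat\<Rightarrow>nat) \<Rightarrow> bool" where
  "valid wt xs z b c1 c2 src \<longleftrightarrow> b 0 = 0 \<and> b z = length xs \<and>
     (\<forall>i<z. b i \<le> c1 i \<and> c1 i \<le> c2 i \<and> c2 i \<le> b (Suc i) \<and>
        (c1 i < c2 i \<longrightarrow> elen wt (take (src i) xs) < elen wt (take (c1 i) xs) \<and>
           src i + (c2 i - c1 i) \<le> length xs \<and>
           (\<forall>t < c2 i - c1 i. xs!(src i + t) = xs!(c1 i + t))))"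

definition phi :: "nat \<Rightarrow> (nat\<Rightarrow>nat) \<Rightarrow> (nat\<Rightarrow>nat) \<Rightarrow> (nat\<Rightarrow>nat) \<Rightarrow> nat" where
  "phi z b c1 c2 = (\<Sum>i<z. (c1 i - b i) + (b (Suc i) - c2 i))"

definition zones :: "nat \<Rightarrow> (nat\<Rightarrow>nat) \<Rightarrow> (nat\<Rightarrow>nat) \<Rightarrow> (nat\<Rightarrow>nat) \<Rightarrow> nat set" where
  "zones z b c1 c2 = (\<Union>i<z. {b i..<c1 i} \<union> {c2 i..<b (Suc i)})"

lemma find_interval:
  fixes f :: "nat \<Rightarrow> nat"
  assumes "f 0 \<le> j" "j < f z"
  shows "\<exists>i<z. f i \<le> j \<and> j < f (Suc i)"
  using assms
proof (induction z)
  case 0 then show ?case by simp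
next
  case (Suc z)
  show ?case
  proof (cases "j < f z")
    case True then show ?thesis using Suc.IH[OF Suc.prems(1) True] less_SucI by blast
  next
    case False then show ?thesis using Suc.prems by (intro exI[of _ z]) auto
  qed
qed

lemma leftmost_zone:
  assumes v: "valid wt xs z b c1 c2 src" and j: "j < length xs"
    and lm: "\<forall>j'<j. xs!j' \<noteq> xs!j"
  shows "j \<in> zones z b c1 c2"
proof -
  obtain i where i: "i < z" "b i \<le> j" "j < b (Suc i)"
    using find_interval[of b j z] v j unfolding valid_def by auto
  have r: "b i \<le> c1 i" "c1 i \<le> c2 i" "c2 i \<le> b (Suc i)" using v i(1) unfolding valid_def by auto
  show ?thesis
  proof (cases "c1 i \<le> j \<and> j < c2 i")
    case True
    then have lt: "c1 i < c2 i" by simp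
    have cp: "elen wt (take (src i) xs) < elen wt (take (c1 i) xs)"
         "\<forall>t < c2 i - c1 i. xs!(src i + t) = xs!(c1 i + t)"
      using v i(1) lt unfolding valid_def by auto
    have "src i < c1 i" using elen_take_less[OF cp(1)] .
    define t where "t = j - c1 i"
    have "t < c2 i - c1 i" using True unfolding t_def by (intro diff_less_mono) auto
    then have "xs!(src i + t) = xs!(c1 i + t)" using cp(2) by blast
    moreover have "c1 i + t = j" using True by (simp add: t_def)
    ultimately have "xs!(src i + t) = xs!j" by simp
    moreover have "src i + t < j" using \<open>src i < c1 i\<close> True unfolding t_def by arith
    ultimately show ?thesis using lm by auto
  next
    case False
    then show ?thesis using i r unfolding zones_def by auto
  qed
qed

lemma card_zones: "card (zones z b c1 c2) \<le> phi z b c1 c2"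
proof -
  have "card (zones z b c1 c2) \<le> (\<Sum>i<z. card ({b i..<c1 i} \<union> {c2 i..<b (Suc i)}))"
    unfolding zones_def by (rule card_UN_le) simp
  also have "\<dots> \<le> phi z b c1 c2" unfolding phi_def
  proof (intro sum_mono)
    fix i
    show "card ({b i..<c1 i} \<union> {c2 i..<b (Suc i)}) \<le> c1 i - b i + (b (Suc i) - c2 i)"
      using card_Un_le[of "{b i..<c1 i}" "{c2 i..<b (Suc i)}"] by simp
  qed
  finally show ?thesis .
qed

lemma first_occ:
  assumes "x \<in> set xs"
  shows "\<exists>j<length xs. xs!j = x \<and> (\<forall>j'<j. xs!j' \<noteq> xs!j)"
proof -
  obtain j0 where "j0 < length xs" "xs!j0 = x" using assms by (metis in_set_conv_nth)
  define j where "j = (LEAST j. j < length xs \<and> xs!j = x)"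
  have jx: "j < length xs \<and> xs!j = x" unfolding j_def
    by (rule LeastI[of _ j0]) (simp add: \<open>j0 < length xs\<close> \<open>xs!j0 = x\<close>)
  moreover have "\<forall>j'<j. xs!j' \<noteq> xs!j"
  proof (intro allI impI)
    fix j' assume "j' < j"
    then have "\<not> (j' < length xs \<and> xs!j' = x)" unfolding j_def by (rule not_less_Least)
    moreover have "j' < length xs" using \<open>j' < j\<close> jx by simp
    ultimately show "xs!j' \<noteq> xs!j" using jx by simp
  qed
  ultimately show ?thesis by blast
qed

lemma finite_zones: "finite (zones z b c1 c2)"
  unfolding zones_def by (intro finite_UN_I) auto

lemma card_set_le_phi:
  assumes v: "valid wt xs z b c1 c2 src"
  shows "card (set xs) \<le> phi z b c1 c2"
proof -
  have "set xs \<subseteq> (\<lambda>j. xs!j) ` zones z b c1 c2"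
  proof
    fix x assume "x \<in> set xs"
    from first_occ[OF this] obtain j where j: "j < length xs" "xs!j = x" "\<forall>j'<j. xs!j' \<noteq> xs!j"
      by blast
    from leftmost_zone[OF v j(1) j(3)] have "j \<in> zones z b c1 c2" .
    then show "x \<in> (\<lambda>j. xs!j) ` zones z b c1 c2" using j(2) by (intro image_eqI) auto
  qed
  then have "card (set xs) \<le> card ((\<lambda>j. xs!j) ` zones z b c1 c2)"
    by (intro card_mono finite_imageI finite_zones)
  also have "\<dots> \<le> card (zones z b c1 c2)" by (intro card_image_le finite_zones)
  also have "\<dots> \<le> phi z b c1 c2" by (rule card_zones)
  finally show ?thesis .
qed


lemma sum_sub_union:
  fixes f :: "'a \<Rightarrow> nat"
  assumes "finite A" "finite B" "S \<subseteq> A \<union> B"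
  shows "sum f S \<le> sum f A + sum f B"
proof -
  have "sum f S \<le> sum f (A \<union> B)" using assms by (intro sum_mono2) auto
  also have "\<dots> \<le> sum f A + sum f B" using sum_Un_nat[OF assms(1,2), of f] by simp
  finally show ?thesis .
qed

lemma sum_min2:
  fixes f :: "'a \<Rightarrow> nat"
  assumes "finite S" "\<forall>j\<in>S. 1 \<le> f j"
  shows "(\<Sum>j\<in>S. min (f j) 2) = card S + card {j\<in>S. 2 \<le> f j}"
proof -
  have "(\<Sum>j\<in>S. min (f j) 2) = (\<Sum>j\<in>S. 1 + (if 2 \<le> f j then 1 else 0))"
    using assms(2) by (intro sum.cong) auto
  also have "\<dots> = (\<Sum>j\<in>S. 1) + (\<Sum>j\<in>S. (if 2 \<le> f j then 1 else 0))"
    by (rule sum.distrib)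
  also have "(\<Sum>j\<in>S. (1::nat)) = card S" by simp
  also have "(\<Sum>j\<in>S. (if 2 \<le> f j then 1 else 0)) = card {j\<in>S. 2 \<le> f j}"
    using assms(1) by (simp add: sum.If_cases Int_def)
  finally show ?thesis by simp
qed

lemma st_append_len: "st (G1 @ G2) (length G1) = length (concat G1)"
  by (simp add: st_def)

lemma nonemp_append: "nonemp (G1 @ G2) \<longleftrightarrow> nonemp G1 \<and> nonemp G2"
  by (auto simp: nonemp_def)

lemma valid_b_mono:
  assumes v: "valid wt xs z b c1 c2 src" and "i \<le> j" "j \<le> z"
  shows "b i \<le> b j"
  using assms(2,3)
proof (induction j)
  case 0 then show ?case by simp
next
  case (Suc j)
  show ?case
  proof (cases "i = Suc j")
    case True then show ?thesis by simp
  next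
    case False
    then have "b i \<le> b j" using Suc by simp
    moreover have "b j \<le> b (Suc j)" using v Suc.prems unfolding valid_def
      by (metis Suc_le_eq le_trans)
    ultimately show ?thesis by simp
  qed
qed

locale grouping =
  fixes grp :: "'s list \<Rightarrow> 's list list" and gg :: "'s list \<Rightarrow> 's"
    and cp :: "'s \<Rightarrow> 's \<Rightarrow> bool" and wt :: "'s \<Rightarrow> nat"
  assumes concat_grp: "concat (grp xs) = xs"
  and grp_ne: "nonemp (grp xs)"
  and grp_app: "xs \<noteq> [] \<Longrightarrow> ys \<noteq> [] \<Longrightarrow> cp (last xs) (hd ys) \<Longrightarrow> grp (xs @ ys) = grp xs @ grp ys"
  and gg_single: "gg [x] = x"
  and gg_wt: "gr \<in> set (grp xs) \<Longrightarrow> wt (gg gr) = elen wt gr"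
  and core_cut: "c1 < c2 \<Longrightarrow> c2 \<le> length xs \<Longrightarrow>
     (\<exists>e1 e2. c1 < e1 \<and> e1 \<le> e2 \<and> e2 < c2 \<and> cp (xs!(e1-1)) (xs!e1) \<and> cp (xs!(e2-1)) (xs!e2) \<and>
        (\<forall>j\<in>starts (grp xs). \<not>(c1+2 \<le> j \<and> j < e1)) \<and>
        (\<forall>j\<in>starts (grp xs). \<not>(e2+2 \<le> j \<and> j < c2)))
     \<or> (\<forall>j\<in>starts (grp xs). \<not>(c1+3 \<le> j \<and> j < c2))"
begin

lemma grp_Nil[simp]: "grp [] = []"
proof (cases "grp []")
  case (Cons g gs)
  have "concat (grp []) = ([] :: 's list)" by (rule concat_grp)
  then have "g = []" using Cons by simp
  then show ?thesis using grp_ne[of "[]"] Cons by (simp add: nonemp_def)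
qed simp

lemma grp_split:
  assumes "0 < e" "e < length xs" "cp (xs!(e-1)) (xs!e)"
  shows "grp xs = grp (take e xs) @ grp (drop e xs)"
proof -
  have "last (take e xs) = xs!(e-1)" using assms by (subst last_conv_nth) auto
  moreover have "hd (drop e xs) = xs!e" using assms by (simp add: hd_drop_conv_nth)
  ultimately have "grp (take e xs @ drop e xs) = grp (take e xs) @ grp (drop e xs)"
    using assms by (intro grp_app) auto
  then show ?thesis by simp
qed

lemma elen_map_gg: "set G \<subseteq> set (grp xs) \<Longrightarrow> elen wt (map gg G) = elen wt (concat G)"
  by (induction G) (auto simp: elen_def gg_wt)

lemma len_concat_take: "e \<le> length xs \<Longrightarrow> length (concat (grp (take e xs))) = e"
  by (simp add: concat_grp)

lemma region_step:
  assumes v: "valid wt xs z b c1 c2 src" and i: "i < z"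
  defines "gs \<equiv> grp xs"
  shows "\<exists>c1' c2' s'. nb gs (b i) \<le> c1' \<and> c1' \<le> c2' \<and> c2' \<le> nb gs (b (Suc i)) \<and>
     (c1' < c2' \<longrightarrow> elen wt (take s' (map gg gs)) < elen wt (take c1' (map gg gs)) \<and>
        s' + (c2' - c1') \<le> length (map gg gs) \<and>
        (\<forall>t<c2'-c1'. map gg gs ! (s'+t) = map gg gs ! (c1' + t))) \<and>
     (\<Sum>j\<in>{nb gs (b i)..<c1'} \<union> {c2'..<nb gs (b (Suc i))}. min (length (gs ! j)) 2)
        \<le> (c1 i - b i) + (b (Suc i) - c2 i) + 7"
proof -
  define B where "B = b i"
  define B2 where "B2 = b (Suc i)"
  define C1 where "C1 = c1 i"
  define C2 where "C2 = c2 i"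
  define S where "S = src i"
  have ne: "nonemp gs" unfolding gs_def by (rule grp_ne)
  have cgs: "concat gs = xs" unfolding gs_def by (rule concat_grp)
  have ord: "B \<le> C1" "C1 \<le> C2" "C2 \<le> B2"
    using v i unfolding valid_def B_def C1_def C2_def B2_def by auto
  have B2l: "B2 \<le> length xs"
    using valid_b_mono[OF v, of "Suc i" z] i v unfolding valid_def B2_def by simp
  have cpy: "C1 < C2 \<Longrightarrow> elen wt (take S xs) < elen wt (take C1 xs) \<and> S + (C2 - C1) \<le> length xs \<and>
           (\<forall>t < C2 - C1. xs!(S + t) = xs!(C1 + t))"
    using v i unfolding valid_def S_def C1_def C2_def by auto
  have stin: "\<And>j. j < length gs \<Longrightarrow> st gs j \<in> starts gs" unfolding starts_def by auto
  show ?thesis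
  proof (cases "C1 < C2 \<and> (\<exists>e1 e2. C1 < e1 \<and> e1 \<le> e2 \<and> e2 < C2 \<and> cp (xs!(e1-1)) (xs!e1) \<and> cp (xs!(e2-1)) (xs!e2) \<and>
        (\<forall>j\<in>starts (grp xs). \<not>(C1+2 \<le> j \<and> j < e1)) \<and>
        (\<forall>j\<in>starts (grp xs). \<not>(e2+2 \<le> j \<and> j < C2)))")
    case False
    have nos: "\<forall>j\<in>starts gs. \<not>(C1+3 \<le> j \<and> j < C2)"
    proof (cases "C1 < C2")
      case True
      have "C2 \<le> length xs" using B2l ord by simp
      from core_cut[OF True this] show ?thesis using False True unfolding gs_def by blast
    next
      case False then show ?thesis by auto
    qed
    define c where "c = nb gs B2"
    have sub: "{nb gs B..<c} \<union> {c..<nb gs B2} \<subseteq> {nb gs B..<nb gs (C1+3)} \<union> {nb gs C2..<nb gs B2}"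
    proof
      fix j assume "j \<in> {nb gs B..<c} \<union> {c..<nb gs B2}"
      then have j: "nb gs B \<le> j" "j < nb gs B2" by (auto simp: c_def)
      then have jl: "j < length gs" "st gs j < B2" using nb_iff'[OF ne] by auto
      show "j \<in> {nb gs B..<nb gs (C1+3)} \<union> {nb gs C2..<nb gs B2}"
      proof (cases "st gs j < C1 + 3")
        case True
        then have "j < nb gs (C1+3)" using nb_iff'[OF ne] jl by auto
        then show ?thesis using j by auto
      next
        case False
        then have "st gs j \<ge> C2" using nos stin[OF jl(1)] by auto
        then have "\<not> j < nb gs C2" using nb_iff'[OF ne] by auto
        then show ?thesis using j by auto
      qed
    qed
    have "(\<Sum>j\<in>{nb gs B..<c} \<union> {c..<nb gs B2}. min (length (gs ! j)) 2)
        \<le> (\<Sum>j\<in>{nb gs B..<nb gs (C1+3)}. min (length (gs ! j)) 2) + (\<Sum>j\<in>{nb gs C2..<nb gs B2}. min (length (gs ! j)) 2)"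
      by (rule sum_sub_union[OF _ _ sub]) auto
    also have "\<dots> \<le> (C1 + 3 - B + 1) + (B2 - C2 + 1)"
      using ord by (intro add_mono sum_min_interval[OF ne]) auto
    also have "\<dots> \<le> (C1 - B) + (B2 - C2) + 7" using ord by simp
    finally have sm: "(\<Sum>j\<in>{nb gs B..<c} \<union> {c..<nb gs B2}. min (length (gs ! j)) 2) \<le> (C1 - B) + (B2 - C2) + 7" .
    have "nb gs B \<le> c" unfolding c_def using ord by (intro nb_mono) simp
    then show ?thesis using sm unfolding B_def B2_def C1_def C2_def
      by (intro exI[of _ c] exI[of _ c] exI[of _ 0]) (simp add: c_def B2_def)
  next
    case True
    then obtain e1 e2 where e: "C1 < e1" "e1 \<le> e2" "e2 < C2" "cp (xs!(e1-1)) (xs!e1)" "cp (xs!(e2-1)) (xs!e2)"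
      and n1: "\<forall>j\<in>starts gs. \<not>(C1+2 \<le> j \<and> j < e1)"
      and n2: "\<forall>j\<in>starts gs. \<not>(e2+2 \<le> j \<and> j < C2)"
      unfolding gs_def by blast
    have lt: "C1 < C2" using True by simp
    note cp2 = cpy[OF lt]
    have e2l: "e2 < length xs" using e ord B2l by simp
    have dec: "grp ws = grp (take f1 ws) @ grp (take (f2 - f1) (drop f1 ws)) @ grp (drop (f2 - f1) (drop f1 ws))"
      if "0 < f1" "f1 \<le> f2" "f2 < length ws" "cp (ws!(f1-1)) (ws!f1)" "cp (ws!(f2-1)) (ws!f2)" for ws f1 f2
    proof -
      have "grp ws = grp (take f1 ws) @ grp (drop f1 ws)" using that by (intro grp_split) auto
      moreover have "grp (drop f1 ws) = grp (take (f2 - f1) (drop f1 ws)) @ grp (drop (f2 - f1) (drop f1 ws))"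
      proof (cases "f1 = f2")
        case True then show ?thesis by simp
      next
        case False
        then show ?thesis using that by (intro grp_split) (auto simp: Suc_diff_Suc)
      qed
      ultimately show ?thesis by simp
    qed
    define s1 where "s1 = S + (e1 - C1)"
    define s2 where "s2 = S + (e2 - C1)"
    have cpt: "\<And>t. t < C2 - C1 \<Longrightarrow> xs!(S + t) = xs!(C1 + t)" using cp2 by blast
    have scl: "S + (C2 - C1) \<le> length xs" using cp2 by blast
    have s2l: "s2 < length xs" using scl e unfolding s2_def by arith
    have x1: "xs!(s1-1) = xs!(e1-1)" "xs!s1 = xs!e1"
      using cpt[of "e1 - 1 - C1"] cpt[of "e1 - C1"] e unfolding s1_def by (auto simp: Suc_diff_Suc)
    have x2: "xs!(s2-1) = xs!(e2-1)" "xs!s2 = xs!e2"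
      using cpt[of "e2 - 1 - C1"] cpt[of "e2 - C1"] e unfolding s2_def by (auto simp: Suc_diff_Suc)
    define G1 where "G1 = grp (take e1 xs)"
    define Gm where "Gm = grp (take (e2 - e1) (drop e1 xs))"
    define G3 where "G3 = grp (drop (e2 - e1) (drop e1 xs))"
    define H1 where "H1 = grp (take s1 xs)"
    define H3 where "H3 = grp (drop (s2 - s1) (drop s1 xs))"
    have mideq: "take (s2 - s1) (drop s1 xs) = take (e2 - e1) (drop e1 xs)"
    proof (rule nth_equalityI)
      show "length (take (s2 - s1) (drop s1 xs)) = length (take (e2 - e1) (drop e1 xs))"
        using s2l e2l e unfolding s1_def s2_def by simp
      fix k assume "k < length (take (s2 - s1) (drop s1 xs))"
      then have k: "k < e2 - e1" "s1 + k < length xs" using s2l unfolding s1_def s2_def by auto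
      have q1: "xs!(S + (e1 - C1 + k)) = xs!(C1 + (e1 - C1 + k))" using e k by (intro cpt) arith
      have q2: "s2 - s1 = e2 - e1" using e unfolding s1_def s2_def by arith
      have q3: "take (s2 - s1) (drop s1 xs) ! k = xs!(s1+k)" using k q2 by simp
      have q4: "take (e2 - e1) (drop e1 xs) ! k = xs!(e1+k)" using k e2l by simp
      have q5: "s1 + k = S + (e1 - C1 + k)" "C1 + (e1 - C1 + k) = e1 + k"
        using e unfolding s1_def by arith+
      show "take (s2 - s1) (drop s1 xs) ! k = take (e2 - e1) (drop e1 xs) ! k"
        using q1 q3 q4 q5 by simp
    qed
    have gsd: "gs = G1 @ Gm @ G3" unfolding gs_def G1_def Gm_def G3_def
      using e e2l by (intro dec) auto
    have gsd': "gs = H1 @ Gm @ H3" unfolding gs_def H1_def Gm_def H3_def mideq[symmetric]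
      using e s2l x1 x2 unfolding s1_def s2_def by (intro dec) auto
    have cG1: "concat G1 = take e1 xs" unfolding G1_def by (rule concat_grp)
    have cH1: "concat H1 = take s1 xs" unfolding H1_def by (rule concat_grp)
    have cGm: "length (concat Gm) = e2 - e1" unfolding Gm_def concat_grp using e2l by simp
    have nb1: "nb gs e1 = length G1"
    proof -
      have "st gs (length G1) = e1" using gsd cG1 e e2l by (simp add: st_append_len)
      then show ?thesis using nb_st[OF ne, of "length G1"] gsd by simp
    qed
    have nb2: "nb gs e2 = length G1 + length Gm"
    proof -
      have "st gs (length (G1 @ Gm)) = e2" using gsd cG1 cGm e e2l
        by (metis append.assoc st_append_len concat_append length_append length_take min_absorb2
            less_imp_le le_add_diff_inverse order.strict_trans1)
      then show ?thesis using nb_st[OF ne, of "length (G1 @ Gm)"] gsd by simp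
    qed
    define c1' where "c1' = length G1"
    define c2' where "c2' = length G1 + length Gm"
    define s' where "s' = length H1"
    have r1: "nb gs B \<le> c1'" unfolding c1'_def nb1[symmetric] using ord e by (intro nb_mono) simp
    have r2: "c2' \<le> nb gs B2" unfolding c2'_def nb2[symmetric] using ord e by (intro nb_mono) simp
    have gsub1: "set G1 \<subseteq> set (grp xs)"
    proof -
      have "grp xs = G1 @ Gm @ G3" using gsd gs_def by simp
      then show ?thesis by (metis set_append sup_ge1)
    qed
    have gsub2: "set H1 \<subseteq> set (grp xs)"
    proof -
      have "grp xs = H1 @ Gm @ H3" using gsd' gs_def by simp
      then show ?thesis by (metis set_append sup_ge1)
    qed
    note gsub = gsub1 gsub2
    have el1: "elen wt (take c1' (map gg gs)) = elen wt (take e1 xs)"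
      unfolding c1'_def gsd using elen_map_gg[OF gsub(1)] cG1 by simp
    have el2: "elen wt (take s' (map gg gs)) = elen wt (take s1 xs)"
      unfolding s'_def gsd' using elen_map_gg[OF gsub(2)] cH1 by simp
    have tk: "take (e1 - C1) (drop S xs) = take (e1 - C1) (drop C1 xs)"
    proof (rule nth_equalityI)
      have "e1 - C1 \<le> length xs - S" "e1 - C1 \<le> length xs - C1" using scl e e2l by arith+
      then show "length (take (e1 - C1) (drop S xs)) = length (take (e1 - C1) (drop C1 xs))"
        by (simp add: min_absorb2)
      fix k assume "k < length (take (e1 - C1) (drop S xs))"
      then have k: "k < e1 - C1" "S + k < length xs" by auto
      have "C1 + k < length xs" using k e e2l by arith
      moreover have "k < C2 - C1" using k e by arith
      ultimately show "take (e1 - C1) (drop S xs) ! k = take (e1 - C1) (drop C1 xs) ! k"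
        using cpt[of k] k by simp
    qed
    have "take s1 xs = take S xs @ take (e1 - C1) (drop S xs)" unfolding s1_def by (simp add: take_add)
    moreover have "take e1 xs = take C1 xs @ take (e1 - C1) (drop C1 xs)"
      using e by (metis le_add_diff_inverse less_imp_le take_add)
    ultimately have elt: "elen wt (take s' (map gg gs)) < elen wt (take c1' (map gg gs))"
      using el1 el2 tk cp2 by simp
    have cpy': "\<forall>t<c2'-c1'. map gg gs ! (s'+t) = map gg gs ! (c1' + t)"
    proof (intro allI impI)
      fix t assume "t < c2' - c1'"
      then have t: "t < length Gm" unfolding c1'_def c2'_def by simp
      have "map gg gs ! (s'+t) = gg (Gm ! t)" unfolding s'_def using t by (subst gsd') (simp add: nth_append)
      moreover have "map gg gs ! (c1'+t) = gg (Gm ! t)" unfolding c1'_def using t by (subst gsd) (simp add: nth_append)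
      ultimately show "map gg gs ! (s'+t) = map gg gs ! (c1' + t)" by simp
    qed
    have lenok: "s' + (c2' - c1') \<le> length (map gg gs)"
      unfolding c1'_def c2'_def s'_def using gsd' by simp
    have sub1: "{nb gs B..<c1'} \<subseteq> {nb gs B..<nb gs (C1+2)}"
    proof
      fix j assume "j \<in> {nb gs B..<c1'}"
      then have j: "nb gs B \<le> j" "j < nb gs e1" using nb1 by (auto simp: c1'_def)
      then have jl: "j < length gs" "st gs j < e1" using nb_iff'[OF ne] by auto
      then have "st gs j < C1 + 2" using n1 stin[OF jl(1)] by auto
      then show "j \<in> {nb gs B..<nb gs (C1+2)}" using j jl nb_iff'[OF ne] by auto
    qed
    have sub2: "{c2'..<nb gs B2} \<subseteq> {nb gs e2..<nb gs (e2+2)} \<union> {nb gs C2..<nb gs B2}"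
    proof
      fix j assume "j \<in> {c2'..<nb gs B2}"
      then have j: "nb gs e2 \<le> j" "j < nb gs B2" using nb2 by (auto simp: c2'_def)
      then have jl: "j < length gs" "st gs j < B2" using nb_iff'[OF ne] by auto
      show "j \<in> {nb gs e2..<nb gs (e2+2)} \<union> {nb gs C2..<nb gs B2}"
      proof (cases "st gs j < e2 + 2")
        case True
        then have "j < nb gs (e2+2)" using nb_iff'[OF ne] jl by auto
        then show ?thesis using j by auto
      next
        case False
        then have "st gs j \<ge> C2" using n2 stin[OF jl(1)] by auto
        then have "\<not> j < nb gs C2" using nb_iff'[OF ne] by auto
        then show ?thesis using j by auto
      qed
    qed
    let ?f = "\<lambda>j. min (length (gs ! j)) 2"
    have a1: "(\<Sum>j\<in>{nb gs B..<c1'} \<union> {c2'..<nb gs B2}. ?f j)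
        \<le> sum ?f {nb gs B..<c1'} + sum ?f {c2'..<nb gs B2}"
      by (rule sum_sub_union) auto
    have a2: "sum ?f {nb gs B..<c1'} \<le> sum ?f {nb gs B..<nb gs (C1+2)}"
      using sub1 by (intro sum_mono2) auto
    have a3: "sum ?f {c2'..<nb gs B2} \<le> sum ?f {nb gs e2..<nb gs (e2+2)} + sum ?f {nb gs C2..<nb gs B2}"
      using sub2 by (intro sum_sub_union) auto
    have a4: "sum ?f {nb gs B..<nb gs (C1+2)} \<le> C1 + 2 - B + 1"
      using ord by (intro sum_min_interval[OF ne]) simp
    have a5: "sum ?f {nb gs e2..<nb gs (e2+2)} \<le> e2 + 2 - e2 + 1"
      by (intro sum_min_interval[OF ne]) simp
    have a6: "sum ?f {nb gs C2..<nb gs B2} \<le> B2 - C2 + 1"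
      using ord by (intro sum_min_interval[OF ne]) simp
    have a7: "C1 + 2 - B + 1 = (C1 - B) + 3" "e2 + 2 - e2 + 1 = 3" using ord by arith+
    have sm: "(\<Sum>j\<in>{nb gs B..<c1'} \<union> {c2'..<nb gs B2}. ?f j) \<le> (C1 - B) + (B2 - C2) + 7"
      using a1 a2 a3 a4 a5 a6 a7 by linarith
    have "c1' \<le> c2'" unfolding c1'_def c2'_def by simp
    then show ?thesis using r1 r2 elt cpy' lenok sm unfolding B_def B2_def C1_def C2_def
      by (intro exI[of _ c1'] exI[of _ c2'] exI[of _ s']) simp
  qed
qed

end


context grouping begin

lemma mem_grp_elem: "j < length (grp xs) \<Longrightarrow> y \<in> set (grp xs ! j) \<Longrightarrow> y \<in> set xs"
proof -
  assume "j < length (grp xs)" "y \<in> set (grp xs ! j)"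
  then have "y \<in> set (concat (grp xs))" by (auto intro: nth_mem)
  then show ?thesis by (simp add: concat_grp)
qed

lemma new_letter_long:
  assumes "j < length (grp xs)" "map gg (grp xs) ! j \<notin> set xs"
  shows "2 \<le> length (grp xs ! j)"
proof (rule ccontr)
  assume "\<not> 2 \<le> length (grp xs ! j)"
  moreover have "grp xs ! j \<noteq> []" using grp_ne[of xs] assms(1) unfolding nonemp_def by auto
  ultimately obtain y where y: "grp xs ! j = [y]"
    by (metis One_nat_def Suc_1 length_0_conv length_Suc_conv less_2_cases not_le_imp_less)
  then have "map gg (grp xs) ! j = y" using assms(1) by (simp add: gg_single)
  moreover have "y \<in> set xs" using mem_grp_elem[OF assms(1)] y by simp
  ultimately show False using assms(2) by simp
qed

theorem family_step:
  assumes v: "valid wt xs z b c1 c2 src"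
  shows "\<exists>b' c1' c2' src'. valid wt (map gg (grp xs)) z b' c1' c2' src' \<and>
     card (set (map gg (grp xs)) - set xs) + phi z b' c1' c2' \<le> phi z b c1 c2 + 7 * z"
proof -
  define gs where "gs = grp xs"
  define xs' where "xs' = map gg gs"
  have ne: "nonemp gs" unfolding gs_def by (rule grp_ne)
  define P where "P = (\<lambda>i c1' c2' s'. nb gs (b i) \<le> c1' \<and> c1' \<le> c2' \<and> c2' \<le> nb gs (b (Suc i)) \<and>
     (c1' < c2' \<longrightarrow> elen wt (take s' xs') < elen wt (take c1' xs') \<and>
        s' + (c2' - c1') \<le> length xs' \<and>
        (\<forall>t<c2'-c1'. xs' ! (s'+t) = xs' ! (c1' + t))) \<and>
     (\<Sum>j\<in>{nb gs (b i)..<c1'} \<union> {c2'..<nb gs (b (Suc i))}. min (length (gs ! j)) 2)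
        \<le> (c1 i - b i) + (b (Suc i) - c2 i) + 7)"
  have ex: "\<exists>p. P i (fst p) (fst (snd p)) (snd (snd p))" if "i < z" for i
  proof -
    from region_step[OF v that] obtain a1 a2 a3 where "P i a1 a2 a3"
      unfolding P_def gs_def xs'_def by blast
    then show ?thesis by (intro exI[of _ "(a1, a2, a3)"]) simp
  qed
  have "\<forall>i\<in>{..<z}. \<exists>p. P i (fst p) (fst (snd p)) (snd (snd p))" using ex by blast
  from bchoice[OF this] obtain F where F0: "\<forall>i\<in>{..<z}. P i (fst (F i)) (fst (snd (F i))) (snd (snd (F i)))"
    by blast
  then have F: "\<And>i. i < z \<Longrightarrow> P i (fst (F i)) (fst (snd (F i))) (snd (snd (F i)))" by blast
  define c1' where "c1' = (\<lambda>i. fst (F i))"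
  define c2' where "c2' = (\<lambda>i. fst (snd (F i)))"
  define s' where "s' = (\<lambda>i. snd (snd (F i)))"
  define b' where "b' = (\<lambda>i. nb gs (b i))"
  have R: "\<And>i. i < z \<Longrightarrow> P i (c1' i) (c2' i) (s' i)" using F unfolding c1'_def c2'_def s'_def by simp
  have cgs: "concat gs = xs" unfolding gs_def by (rule concat_grp)
  have bz: "b z = length xs" "b 0 = 0" using v unfolding valid_def by auto
  have v0: "b' 0 = 0" unfolding b'_def using bz by simp
  have vz: "b' z = length xs'" unfolding b'_def xs'_def using bz nb_total[OF ne] cgs by simp
  have vi: "b' i \<le> c1' i \<and> c1' i \<le> c2' i \<and> c2' i \<le> b' (Suc i) \<and>
        (c1' i < c2' i \<longrightarrow> elen wt (take (s' i) xs') < elen wt (take (c1' i) xs') \<and>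
           s' i + (c2' i - c1' i) \<le> length xs' \<and>
           (\<forall>t < c2' i - c1' i. xs'!(s' i + t) = xs'!(c1' i + t)))" if "i < z" for i
    using R[OF that] unfolding P_def b'_def by blast
  have v': "valid wt xs' z b' c1' c2' s'"
    unfolding valid_def using v0 vz vi by blast
  define Zn where "Zn = (\<lambda>i. {b' i..<c1' i} \<union> {c2' i..<b' (Suc i)})"
  define K where "K = (\<lambda>i. {j\<in>Zn i. 2 \<le> length (gs ! j)})"
  have finZ: "finite (Zn i)" for i unfolding Zn_def by simp
  have phi': "phi z b' c1' c2' = (\<Sum>i<z. card (Zn i))"
    unfolding phi_def
  proof (intro sum.cong refl)
    fix i assume "i \<in> {..<z}"
    then have "c1' i \<le> c2' i" using R unfolding P_def by auto
    then have "card (Zn i) = card {b' i..<c1' i} + card {c2' i..<b' (Suc i)}"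
      unfolding Zn_def by (intro card_Un_disjoint) auto
    then show "c1' i - b' i + (b' (Suc i) - c2' i) = card (Zn i)" by simp
  qed
  have per: "card (Zn i) + card (K i) \<le> (c1 i - b i) + (b (Suc i) - c2 i) + 7" if i: "i < z" for i
  proof -
    note r = R[OF i, unfolded P_def]
    have bl: "b' (Suc i) \<le> length gs" unfolding b'_def by (rule nb_le)
    have "\<forall>j\<in>Zn i. 1 \<le> length (gs ! j)"
    proof
      fix j assume "j \<in> Zn i"
      then have "j < length gs" using bl r unfolding Zn_def b'_def by auto
      then have "gs ! j \<noteq> []" using ne unfolding nonemp_def by auto
      then show "1 \<le> length (gs ! j)" by (cases "gs ! j") auto
    qed
    then have "(\<Sum>j\<in>Zn i. min (length (gs ! j)) 2) = card (Zn i) + card (K i)"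
      unfolding K_def by (intro sum_min2 finZ)
    then show ?thesis using r unfolding Zn_def b'_def by simp
  qed
  have Dsub: "set xs' - set xs \<subseteq> (\<lambda>j. xs' ! j) ` (\<Union>i<z. K i)"
  proof
    fix x assume x: "x \<in> set xs' - set xs"
    from first_occ[of x xs'] x obtain j where j: "j < length xs'" "xs'!j = x" "\<forall>j'<j. xs'!j' \<noteq> xs'!j"
      by blast
    from leftmost_zone[OF v' j(1) j(3)] obtain i where i: "i < z" "j \<in> Zn i"
      unfolding zones_def Zn_def by blast
    have "2 \<le> length (gs ! j)" using new_letter_long[of j xs] j x unfolding gs_def xs'_def by simp
    then have "j \<in> K i" using i unfolding K_def by simp
    then show "x \<in> (\<lambda>j. xs' ! j) ` (\<Union>i<z. K i)" using i j by blast
  qed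
  have "card (set xs' - set xs) \<le> card ((\<lambda>j. xs' ! j) ` (\<Union>i<z. K i))"
    by (intro card_mono finite_imageI Dsub finite_UN_I) (auto simp: K_def finZ)
  also have "\<dots> \<le> card (\<Union>i<z. K i)"
    by (intro card_image_le finite_UN_I) (auto simp: K_def finZ)
  also have "\<dots> \<le> (\<Sum>i<z. card (K i))" by (rule card_UN_le) simp
  finally have cD: "card (set xs' - set xs) \<le> (\<Sum>i<z. card (K i))" .
  have "card (set xs' - set xs) + phi z b' c1' c2' \<le> (\<Sum>i<z. card (K i)) + (\<Sum>i<z. card (Zn i))"
    using cD phi' by simp
  also have "\<dots> = (\<Sum>i<z. card (Zn i) + card (K i))" by (simp add: sum.distrib)
  also have "\<dots> \<le> (\<Sum>i<z. (c1 i - b i) + (b (Suc i) - c2 i) + 7)" by (intro sum_mono per) simp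
  also have "\<dots> = phi z b c1 c2 + 7 * z" unfolding phi_def by (simp add: sum.distrib)
  finally have "card (set xs' - set xs) + phi z b' c1' c2' \<le> phi z b c1 c2 + 7 * z" .
  then show ?thesis using v' unfolding xs'_def gs_def by blast
qed

lemma new_shrink: "card (set (map gg (grp xs)) - set xs) + length (grp xs) \<le> length xs"
proof -
  define gs where "gs = grp xs"
  define xs' where "xs' = map gg gs"
  define K where "K = {j. j < length gs \<and> 2 \<le> length (gs ! j)}"
  have ne: "nonemp gs" unfolding gs_def by (rule grp_ne)
  have "set xs' - set xs \<subseteq> (\<lambda>j. xs' ! j) ` K"
  proof
    fix x assume x: "x \<in> set xs' - set xs"
    then obtain j where j: "j < length xs'" "xs'!j = x" by (metis DiffD1 in_set_conv_nth)
    then have "2 \<le> length (gs ! j)" using new_letter_long[of j xs] x unfolding gs_def xs'_def by simp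
    then show "x \<in> (\<lambda>j. xs' ! j) ` K" using j unfolding K_def xs'_def by auto
  qed
  then have "card (set xs' - set xs) \<le> card ((\<lambda>j. xs' ! j) ` K)"
    by (intro card_mono finite_imageI) (auto simp: K_def)
  also have "\<dots> \<le> card K" by (intro card_image_le) (auto simp: K_def)
  finally have c1: "card (set xs' - set xs) \<le> card K" .
  have K': "K = {j\<in>{0..<length gs}. 2 \<le> length (gs ! j)}" unfolding K_def by auto
  have "\<forall>j\<in>{0..<length gs}. 1 \<le> length (gs ! j)"
  proof
    fix j assume "j \<in> {0..<length gs}"
    then have "gs ! j \<noteq> []" using ne unfolding nonemp_def by auto
    then show "1 \<le> length (gs ! j)" by (cases "gs ! j") auto
  qed
  then have "(\<Sum>j\<in>{0..<length gs}. min (length (gs ! j)) 2) = card {0..<length gs} + card K"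
    unfolding K' by (intro sum_min2) simp
  moreover have "(\<Sum>j\<in>{0..<length gs}. min (length (gs ! j)) 2) \<le> (\<Sum>j\<in>{0..<length gs}. length (gs ! j))"
    by (intro sum_mono) simp
  moreover have "(\<Sum>j\<in>{0..<length gs}. length (gs ! j)) = length xs"
    using sum_len_st[of 0 "length gs" gs] st_len[of gs "length gs"] concat_grp[of xs]
    unfolding gs_def by simp
  ultimately have "card K + length gs \<le> length xs" by simp
  then show ?thesis using c1 unfolding xs'_def gs_def by simp
qed

end


fun wt :: "'a sym \<Rightarrow> nat" where
  "wt (Chr c) = 1"
| "wt (Run h x d) = d * wt x"
| "wt (Pr h a b) = wt a + wt b"

function rgrp :: "'b list \<Rightarrow> 'b list list" where
  "rgrp [] = []"
| "rgrp (x # xs) = (x # takeWhile (\<lambda>y. y = x) xs) # rgrp (dropWhile (\<lambda>y. y = x) xs)"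
  by pat_completeness auto
termination
  by (relation "measure length") (auto simp: le_imp_less_Suc length_dropWhile_le)

definition rg :: "nat \<Rightarrow> 'a sym list \<Rightarrow> 'a sym" where
  "rg h gr = (if length gr = 1 then hd gr else Run h (hd gr) (length gr))"

lemma run_compress_rgrp: "run_compress h xs = map (rg h) (rgrp xs)"
  by (induction xs rule: rgrp.induct) (auto simp: rg_def Let_def)

lemma concat_rgrp: "concat (rgrp xs) = xs"
  by (induction xs rule: rgrp.induct) simp_all

lemma rgrp_ne: "nonemp (rgrp xs)"
  by (induction xs rule: rgrp.induct) (simp_all add: nonemp_def)

lemma rgrp_rep: "gr \<in> set (rgrp xs) \<Longrightarrow> gr = replicate (length gr) (hd gr)"
proof (induction xs rule: rgrp.induct)
  case 1 then show ?case by simp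
next
  case (2 x xs)
  show ?case
  proof (cases "gr = x # takeWhile (\<lambda>y. y = x) xs")
    case True
    have "\<forall>y\<in>set gr. y = hd gr" using True by (auto dest: set_takeWhileD)
    then show ?thesis by (simp add: replicate_length_same)
  next
    case False
    then show ?thesis using 2 by simp
  qed
qed

lemma last_dropWhile: "dropWhile P xs \<noteq> [] \<Longrightarrow> last (dropWhile P xs) = last xs"
  by (metis last_appendR takeWhile_dropWhile_id)

lemma rgrp_app: "xs \<noteq> [] \<Longrightarrow> ys \<noteq> [] \<Longrightarrow> last xs \<noteq> hd ys \<Longrightarrow> rgrp (xs @ ys) = rgrp xs @ rgrp ys"
proof (induction xs arbitrary: ys rule: rgrp.induct)
  case 1 then show ?case by simp
next
  case (2 x xs')
  show ?case
  proof (cases "\<forall>y\<in>set xs'. y = x")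
    case True
    have lx: "last (x # xs') = x" using True by (cases xs' rule: rev_cases) auto
    have hy: "hd ys \<noteq> x" using 2 lx by simp
    have tw: "takeWhile (\<lambda>y. y = x) ys = []" using hy 2(3) by (cases ys) auto
    have dw: "dropWhile (\<lambda>y. y = x) ys = ys" using hy 2(3) by (cases ys) auto
    have "rgrp ((x # xs') @ ys) = (x # xs') # rgrp ys"
      using True tw dw by simp
    moreover have "rgrp (x # xs') = [x # xs']"
    proof -
      have a: "dropWhile (\<lambda>y. y = x) xs' = []" using True by simp
      have b: "takeWhile (\<lambda>y. y = x) xs' = xs'" using True by simp
      have "rgrp (x # xs') = (x # takeWhile (\<lambda>y. y = x) xs') # rgrp (dropWhile (\<lambda>y. y = x) xs')"
        by (rule rgrp.simps(2))
      then show ?thesis by (simp only: a b rgrp.simps(1))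
    qed
    ultimately show ?thesis by (simp only: append_Cons append_Nil)
  next
    case False
    then obtain y where y: "y \<in> set xs'" "y \<noteq> x" by blast
    have tw: "takeWhile (\<lambda>y. y = x) (xs' @ ys) = takeWhile (\<lambda>y. y = x) xs'"
      using y by simp
    have dw: "dropWhile (\<lambda>y. y = x) (xs' @ ys) = dropWhile (\<lambda>y. y = x) xs' @ ys"
      using y by simp
    have dne: "dropWhile (\<lambda>y. y = x) xs' \<noteq> []" using False by simp
    have "last (dropWhile (\<lambda>y. y = x) xs') = last xs'" by (rule last_dropWhile[OF dne])
    also have "\<dots> = last (x # xs')" using y by auto
    finally have ld: "last (dropWhile (\<lambda>y. y = x) xs') \<noteq> hd ys" using 2 by simp
    have "rgrp (dropWhile (\<lambda>y. y = x) xs' @ ys) = rgrp (dropWhile (\<lambda>y. y = x) xs') @ rgrp ys"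
      using 2(1)[OF dne 2(3) ld] .
    then show ?thesis using tw dw by simp
  qed
qed

lemma st_Cons_Suc: "st (g # gs) (Suc j) = length g + st gs j"
  by (simp add: st_def)

lemma starts_Cons: "starts (g # gs) = insert 0 ((\<lambda>j. length g + j) ` starts gs)"
proof
  show "starts (g # gs) \<subseteq> insert 0 ((\<lambda>j. length g + j) ` starts gs)"
  proof
    fix k assume "k \<in> starts (g # gs)"
    then obtain j where j: "k = st (g # gs) j" "j < Suc (length gs)" unfolding starts_def by auto
    show "k \<in> insert 0 ((\<lambda>j. length g + j) ` starts gs)"
    proof (cases j)
      case 0 then show ?thesis using j by simp
    next
      case (Suc j')
      then have "k = length g + st gs j'" "j' < length gs" using j by (auto simp: st_Cons_Suc)
      then show ?thesis unfolding starts_def by auto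
    qed
  qed
next
  show "insert 0 ((\<lambda>j. length g + j) ` starts gs) \<subseteq> starts (g # gs)"
  proof
    fix k assume "k \<in> insert 0 ((\<lambda>j. length g + j) ` starts gs)"
    then consider "k = 0" | j where "j < length gs" "k = length g + st gs j"
      unfolding starts_def by auto
    then show "k \<in> starts (g # gs)"
    proof cases
      case 1
      then have "k = st (g # gs) 0" by simp
      then show ?thesis unfolding starts_def by fastforce
    next
      case 2
      then have "k = st (g # gs) (Suc j)" by (simp add: st_Cons_Suc)
      then show ?thesis using 2 unfolding starts_def by fastforce
    qed
  qed
qed

lemma starts_Nil[simp]: "starts [] = {}" by (simp add: starts_def)

lemma starts_rgrp: "j \<in> starts (rgrp xs) \<Longrightarrow> 0 < j \<Longrightarrow> j < length xs \<and> xs!(j-1) \<noteq> xs!j"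
proof (induction xs arbitrary: j rule: rgrp.induct)
  case 1 then show ?case by simp
next
  case (2 x xs)
  define g where "g = x # takeWhile (\<lambda>y. y = x) xs"
  define d where "d = dropWhile (\<lambda>y. y = x) xs"
  have xd: "x # xs = g @ d" unfolding g_def d_def by simp
  have gx: "\<forall>y\<in>set g. y = x" unfolding g_def by (auto dest: set_takeWhileD)
  have "j \<in> insert 0 ((\<lambda>j. length g + j) ` starts (rgrp d))"
    using 2(2) starts_Cons[of g "rgrp d"] unfolding g_def d_def by simp
  then obtain j0 where j0: "j = length g + j0" "j0 \<in> starts (rgrp d)" using 2(3) by auto
  show ?case
  proof (cases "j0 = 0")
    case True
    have "rgrp d \<noteq> []" using j0 by auto
    then have dne: "d \<noteq> []" by auto
    have "hd d \<noteq> x" using hd_dropWhile[of "\<lambda>y. y = x" xs] dne unfolding d_def by simp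
    moreover have "(g @ d) ! j = hd d" using j0 True dne by (simp add: nth_append hd_conv_nth)
    moreover have "(g @ d) ! (j - 1) = x"
    proof -
      have "j - 1 < length g" using j0 True unfolding g_def by simp
      then have "(g @ d) ! (j - 1) = g ! (j - 1)" by (simp add: nth_append)
      then show ?thesis using gx \<open>j - 1 < length g\<close> by (metis nth_mem)
    qed
    moreover have "j < length (g @ d)" using j0 True dne by simp
    ultimately show ?thesis using xd by metis
  next
    case False
    then have ih: "j0 < length d \<and> d!(j0-1) \<noteq> d!j0" using 2(1)[of j0] j0 unfolding d_def by simp
    have "(g @ d) ! j = d ! j0" using j0 by (simp add: nth_append)
    moreover have "(g @ d) ! (j - 1) = d ! (j0 - 1)"
    proof -
      have "j - 1 = length g + (j0 - 1)" using j0 False by simp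
      then show ?thesis by (simp only: nth_append_length_plus)
    qed
    moreover have "j < length (g @ d)" using j0 ih by simp
    ultimately show ?thesis using xd ih by metis
  qed
qed

lemma runs_core_cut:
  assumes "c1 < c2" "c2 \<le> length xs"
  shows "(\<exists>e1 e2. c1 < e1 \<and> e1 \<le> e2 \<and> e2 < c2 \<and> xs!(e1-1) \<noteq> xs!e1 \<and> xs!(e2-1) \<noteq> xs!e2 \<and>
        (\<forall>j\<in>starts (rgrp xs). \<not>(c1+2 \<le> j \<and> j < e1)) \<and>
        (\<forall>j\<in>starts (rgrp xs). \<not>(e2+2 \<le> j \<and> j < c2)))
     \<or> (\<forall>j\<in>starts (rgrp xs). \<not>(c1+3 \<le> j \<and> j < c2))"
proof -
  define D where "D = {e. c1 < e \<and> e < c2 \<and> xs!(e-1) \<noteq> xs!e}"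
  have fD: "finite D" unfolding D_def by (rule finite_subset[of _ "{..<c2}"]) auto
  have inD: "j \<in> D" if "j \<in> starts (rgrp xs)" "c1 < j" "j < c2" for j
    using starts_rgrp[OF that(1)] that unfolding D_def by auto
  show ?thesis
  proof (cases "D = {}")
    case True
    then show ?thesis using inD by force
  next
    case False
    define e1 where "e1 = Min D"
    define e2 where "e2 = Max D"
    have e1D: "e1 \<in> D" "e2 \<in> D" unfolding e1_def e2_def using fD False by auto
    have "e1 \<le> e2" unfolding e1_def e2_def using fD False by simp
    moreover have "\<forall>j\<in>starts (rgrp xs). \<not>(c1+2 \<le> j \<and> j < e1)"
    proof (intro ballI notI)
      fix j assume "j \<in> starts (rgrp xs)" "c1+2 \<le> j \<and> j < e1"
      moreover have "e1 < c2" using e1D unfolding D_def by auto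
      ultimately have "j \<in> D" using inD by auto
      then have "e1 \<le> j" unfolding e1_def using fD by simp
      then show False using \<open>c1+2 \<le> j \<and> j < e1\<close> by simp
    qed
    moreover have "\<forall>j\<in>starts (rgrp xs). \<not>(e2+2 \<le> j \<and> j < c2)"
    proof (intro ballI notI)
      fix j assume "j \<in> starts (rgrp xs)" "e2+2 \<le> j \<and> j < c2"
      moreover have "c1 < e2" using e1D unfolding D_def by auto
      ultimately have "j \<in> D" using inD by auto
      then have "j \<le> e2" unfolding e2_def using fD by simp
      then show False using \<open>e2+2 \<le> j \<and> j < c2\<close> by simp
    qed
    ultimately show ?thesis using e1D unfolding D_def by blast
  qed
qed

lemma runs_grouping: "grouping rgrp (rg h) (\<lambda>a b. a \<noteq> b) wt"
proof (unfold_locales)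
  fix xs :: "'a sym list"
  show "concat (rgrp xs) = xs" by (rule concat_rgrp)
  show "nonemp (rgrp xs)" by (rule rgrp_ne)
next
  fix xs ys :: "'a sym list"
  assume "xs \<noteq> []" "ys \<noteq> []" "last xs \<noteq> hd ys"
  then show "rgrp (xs @ ys) = rgrp xs @ rgrp ys" by (rule rgrp_app)
next
  fix x :: "'a sym" show "rg h [x] = x" by (simp add: rg_def)
next
  fix gr xs :: "'a sym list"
  assume a: "gr \<in> set (rgrp xs)"
  have rep: "gr = replicate (length gr) (hd gr)" using rgrp_rep[OF a] .
  show "wt (rg h gr) = elen wt gr"
  proof (cases "length gr = 1")
    case True
    then have "gr = [hd gr]" using rep by (metis One_nat_def replicate_Suc replicate_0)
    then show ?thesis by (metis elen_def list.map(1,2) rg_def sum_list_simps(1,2) add.right_neutral True)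
  next
    case False
    have "elen wt gr = length gr * wt (hd gr)"
      unfolding elen_def by (subst rep) (simp add: sum_list_replicate)
    then show ?thesis using False by (simp add: rg_def)
  qed
next
  fix c1 c2 :: nat and xs :: "'a sym list"
  assume "c1 < c2" "c2 \<le> length xs"
  then show "(\<exists>e1 e2. c1 < e1 \<and> e1 \<le> e2 \<and> e2 < c2 \<and> xs!(e1-1) \<noteq> xs!e1 \<and> xs!(e2-1) \<noteq> xs!e2 \<and>
        (\<forall>j\<in>starts (rgrp xs). \<not>(c1+2 \<le> j \<and> j < e1)) \<and>
        (\<forall>j\<in>starts (rgrp xs). \<not>(e2+2 \<le> j \<and> j < c2)))
     \<or> (\<forall>j\<in>starts (rgrp xs). \<not>(c1+3 \<le> j \<and> j < c2))" by (rule runs_core_cut)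
qed


fun pgrp :: "'b set \<Rightarrow> 'b set \<Rightarrow> 'b list \<Rightarrow> 'b list list" where
  "pgrp L R (a # b # xs) = (if a \<in> L \<and> b \<in> R then [a, b] # pgrp L R xs else [a] # pgrp L R (b # xs))"
| "pgrp L R xs = map (\<lambda>x. [x]) xs"

definition pg :: "nat \<Rightarrow> 'a sym list \<Rightarrow> 'a sym" where
  "pg h gr = (if length gr = 2 then Pr h (gr!0) (gr!1) else hd gr)"

lemma pair_replace_pgrp: "pair_replace h L R xs = map (pg h) (pgrp L R xs)"
  by (induction L R xs rule: pgrp.induct) (auto simp: pg_def)

lemma concat_pgrp: "concat (pgrp L R xs) = xs"
  by (induction L R xs rule: pgrp.induct) auto

lemma pgrp_ne: "nonemp (pgrp L R xs)"
  by (induction L R xs rule: pgrp.induct) (auto simp: nonemp_def)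

lemma pgrp_shape: "gr \<in> set (pgrp L R xs) \<Longrightarrow> (\<exists>a. gr = [a]) \<or> (\<exists>a b. gr = [a, b])"
  by (induction L R xs rule: pgrp.induct) (auto split: if_splits)

lemma pgrp_app: "xs \<noteq> [] \<Longrightarrow> ys \<noteq> [] \<Longrightarrow> \<not> (last xs \<in> L \<and> hd ys \<in> R) \<Longrightarrow>
    pgrp L R (xs @ ys) = pgrp L R xs @ pgrp L R ys"
proof (induction L R xs arbitrary: ys rule: pgrp.induct)
  case (1 L R a b xs)
  show ?case
  proof (cases "a \<in> L \<and> b \<in> R")
    case True
    show ?thesis
    proof (cases "xs = []")
      case True
      then show ?thesis using \<open>a \<in> L \<and> b \<in> R\<close> by simp
    next
      case False
      then have "last (a # b # xs) = last xs" by simp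
      then show ?thesis using 1 True False by simp
    qed
  next
    case False
    have l: "last (a # b # xs) = last (b # xs)" by simp
    have "pgrp L R ((a # b # xs) @ ys) = [a] # pgrp L R ((b # xs) @ ys)" using False by simp
    also have "pgrp L R ((b # xs) @ ys) = pgrp L R (b # xs) @ pgrp L R ys"
      using "1.IH"(2)[OF False, of ys] "1.prems" l by simp
    also have "[a] # (pgrp L R (b # xs) @ pgrp L R ys) = pgrp L R (a # b # xs) @ pgrp L R ys"
      using False by simp
    finally show ?thesis .
  qed
next
  case ("2_1" L R) then show ?case by simp
next
  case ("2_2" L R v)
  then obtain c ys' where ys: "ys = c # ys'" by (cases ys) auto
  then show ?case using "2_2" by simp
qed

lemma pairs_core_cut:
  assumes LR: "L \<inter> R = {}" and "c1 < c2" "c2 \<le> length xs"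
  shows "(\<exists>e1 e2. c1 < e1 \<and> e1 \<le> e2 \<and> e2 < c2 \<and> \<not>(xs!(e1-1) \<in> L \<and> xs!e1 \<in> R) \<and> \<not>(xs!(e2-1) \<in> L \<and> xs!e2 \<in> R) \<and>
        (\<forall>j\<in>starts (pgrp L R xs). \<not>(c1+2 \<le> j \<and> j < e1)) \<and>
        (\<forall>j\<in>starts (pgrp L R xs). \<not>(e2+2 \<le> j \<and> j < c2)))
     \<or> (\<forall>j\<in>starts (pgrp L R xs). \<not>(c1+3 \<le> j \<and> j < c2))"
proof (cases "c1 + 4 \<le> c2")
  case False then show ?thesis by auto
next
  case True
  define e1 where "e1 = (if \<not>(xs!c1 \<in> L \<and> xs!(c1+1) \<in> R) then c1+1 else c1+2)"
  define e2 where "e2 = (if \<not>(xs!(c2-2) \<in> L \<and> xs!(c2-1) \<in> R) then c2-1 else c2-2)"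
  have r1: "c1 < e1" "e1 \<le> c1 + 2" unfolding e1_def by auto
  have r2: "e2 < c2" "c2 - 2 \<le> e2" unfolding e2_def using True by auto
  have p1: "\<not>(xs!(e1-1) \<in> L \<and> xs!e1 \<in> R)"
  proof (cases "\<not>(xs!c1 \<in> L \<and> xs!(c1+1) \<in> R)")
    case True then show ?thesis unfolding e1_def by simp
  next
    case False
    then have "xs!(c1+1) \<notin> L" using LR by auto
    then show ?thesis unfolding e1_def using False by simp
  qed
  have p2: "\<not>(xs!(e2-1) \<in> L \<and> xs!e2 \<in> R)"
  proof (cases "\<not>(xs!(c2-2) \<in> L \<and> xs!(c2-1) \<in> R)")
    case True
    moreover have "c2 - 1 - 1 = c2 - 2" by simp
    ultimately show ?thesis unfolding e2_def by simp
  next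
    case False
    then have "xs!(c2-2) \<notin> R" using LR by auto
    then show ?thesis unfolding e2_def using False by simp
  qed
  have "e1 \<le> e2" using r1 r2 True by simp
  then show ?thesis using r1 r2 p1 p2 by (intro disjI1 exI[of _ e1] exI[of _ e2]) auto
qed

lemma pairs_grouping:
  assumes LR: "L \<inter> R = {}"
  shows "grouping (pgrp L R) (pg h) (\<lambda>a b. \<not>(a \<in> L \<and> b \<in> R)) wt"
proof (unfold_locales)
  fix xs :: "'a sym list"
  show "concat (pgrp L R xs) = xs" by (rule concat_pgrp)
  show "nonemp (pgrp L R xs)" by (rule pgrp_ne)
next
  fix xs ys :: "'a sym list"
  assume "xs \<noteq> []" "ys \<noteq> []" "\<not>(last xs \<in> L \<and> hd ys \<in> R)"
  then show "pgrp L R (xs @ ys) = pgrp L R xs @ pgrp L R ys" by (rule pgrp_app)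
next
  fix x :: "'a sym" show "pg h [x] = x" by (simp add: pg_def)
next
  fix gr xs :: "'a sym list"
  assume a: "gr \<in> set (pgrp L R xs)"
  from pgrp_shape[OF a] show "wt (pg h gr) = elen wt gr"
    by (auto simp: pg_def elen_def)
next
  fix c1 c2 :: nat and xs :: "'a sym list"
  assume "c1 < c2" "c2 \<le> length xs"
  then show "(\<exists>e1 e2. c1 < e1 \<and> e1 \<le> e2 \<and> e2 < c2 \<and> \<not>(xs!(e1-1) \<in> L \<and> xs!e1 \<in> R) \<and> \<not>(xs!(e2-1) \<in> L \<and> xs!e2 \<in> R) \<and>
        (\<forall>j\<in>starts (pgrp L R xs). \<not>(c1+2 \<le> j \<and> j < e1)) \<and>
        (\<forall>j\<in>starts (pgrp L R xs). \<not>(e2+2 \<le> j \<and> j < c2)))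
     \<or> (\<forall>j\<in>starts (pgrp L R xs). \<not>(c1+3 \<le> j \<and> j < c2))" by (rule pairs_core_cut[OF LR])
qed


lemma length_filter_disj:
  assumes "\<forall>x\<in>set ys. \<not>(P x \<and> Q x)"
  shows "length (filter (\<lambda>x. P x \<or> Q x) ys) = length (filter P ys) + length (filter Q ys)"
  using assms by (induction ys) auto

lemma length_filter_cover:
  assumes "\<forall>x\<in>set ys. P x \<or> Q x"
  shows "length ys \<le> length (filter P ys) + length (filter Q ys)"
  using assms by (induction ys) auto

lemma length_filter_cong':
  assumes "\<forall>x\<in>set ys. P x = Q x"
  shows "length (filter P ys) = length (filter Q ys)"
  using assms by (metis filter_cong)

definition cross :: "'b list \<Rightarrow> 'b set \<Rightarrow> 'b set \<Rightarrow> nat" where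
  "cross xs L R = length (filter (\<lambda>(a, b). (a \<in> L \<and> b \<in> R) \<or> (a \<in> R \<and> b \<in> L)) (adj_pairs xs))"

definition same :: "'b list \<Rightarrow> 'b set \<Rightarrow> 'b set \<Rightarrow> nat" where
  "same xs L R = length (filter (\<lambda>(a, b). (a \<in> L \<and> b \<in> L) \<or> (a \<in> R \<and> b \<in> R)) (adj_pairs xs))"

definition adjdiff :: "'b list \<Rightarrow> bool" where
  "adjdiff xs = (\<forall>(a, b)\<in>set (adj_pairs xs). a \<noteq> b)"

lemma cross_insL:
  assumes "c \<notin> L" "c \<notin> R"
  shows "cross xs (insert c L) R = cross xs L R + pair_cnt xs c R"
proof -
  have "cross xs (insert c L) R = length (filter (\<lambda>p. (\<lambda>(a, b). (a \<in> L \<and> b \<in> R) \<or> (a \<in> R \<and> b \<in> L)) p \<or>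
           (\<lambda>(a, b). (a = c \<and> b \<in> R) \<or> (b = c \<and> a \<in> R)) p) (adj_pairs xs))"
    unfolding cross_def by (intro length_filter_cong') auto
  also have "\<dots> = cross xs L R + pair_cnt xs c R"
    unfolding cross_def pair_cnt_def using assms by (intro length_filter_disj) auto
  finally show ?thesis .
qed

lemma cross_insR:
  assumes "c \<notin> L" "c \<notin> R"
  shows "cross xs L (insert c R) = cross xs L R + pair_cnt xs c L"
proof -
  have "cross xs L (insert c R) = length (filter (\<lambda>p. (\<lambda>(a, b). (a \<in> L \<and> b \<in> R) \<or> (a \<in> R \<and> b \<in> L)) p \<or>
           (\<lambda>(a, b). (a = c \<and> b \<in> L) \<or> (b = c \<and> a \<in> L)) p) (adj_pairs xs))"
    unfolding cross_def by (intro length_filter_cong') auto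
  also have "\<dots> = cross xs L R + pair_cnt xs c L"
    unfolding cross_def pair_cnt_def using assms by (intro length_filter_disj) auto
  finally show ?thesis .
qed

lemma same_insL:
  assumes "c \<notin> L" "c \<notin> R" "adjdiff xs"
  shows "same xs (insert c L) R = same xs L R + pair_cnt xs c L"
proof -
  have "same xs (insert c L) R = length (filter (\<lambda>p. (\<lambda>(a, b). (a \<in> L \<and> b \<in> L) \<or> (a \<in> R \<and> b \<in> R)) p \<or>
           (\<lambda>(a, b). (a = c \<and> b \<in> L) \<or> (b = c \<and> a \<in> L)) p) (adj_pairs xs))"
    unfolding same_def using assms(3) unfolding adjdiff_def by (intro length_filter_cong') auto
  also have "\<dots> = same xs L R + pair_cnt xs c L"
    unfolding same_def pair_cnt_def using assms by (intro length_filter_disj) auto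
  finally show ?thesis .
qed

lemma same_insR:
  assumes "c \<notin> L" "c \<notin> R" "adjdiff xs"
  shows "same xs L (insert c R) = same xs L R + pair_cnt xs c R"
proof -
  have "same xs L (insert c R) = length (filter (\<lambda>p. (\<lambda>(a, b). (a \<in> L \<and> b \<in> L) \<or> (a \<in> R \<and> b \<in> R)) p \<or>
           (\<lambda>(a, b). (a = c \<and> b \<in> R) \<or> (b = c \<and> a \<in> R)) p) (adj_pairs xs))"
    unfolding same_def using assms(3) unfolding adjdiff_def by (intro length_filter_cong') auto
  also have "\<dots> = same xs L R + pair_cnt xs c R"
    unfolding same_def pair_cnt_def using assms by (intro length_filter_disj) auto
  finally show ?thesis .
qed

lemma fold_greedy:
  assumes "distinct cs" "set cs \<inter> (L \<union> R) = {}" "L \<inter> R = {}" "adjdiff xs" "same xs L R \<le> cross xs L R"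
  shows "fst (fold (greedy_step xs) cs (L, R)) \<inter> snd (fold (greedy_step xs) cs (L, R)) = {} \<and>
         fst (fold (greedy_step xs) cs (L, R)) \<union> snd (fold (greedy_step xs) cs (L, R)) = L \<union> R \<union> set cs \<and>
         same xs (fst (fold (greedy_step xs) cs (L, R))) (snd (fold (greedy_step xs) cs (L, R)))
           \<le> cross xs (fst (fold (greedy_step xs) cs (L, R))) (snd (fold (greedy_step xs) cs (L, R)))"
  using assms
proof (induction cs arbitrary: L R)
  case Nil then show ?case by simp
next
  case (Cons c cs)
  have cL: "c \<notin> L" "c \<notin> R" using Cons.prems(2) by auto
  show ?case
  proof (cases "pair_cnt xs c R \<ge> pair_cnt xs c L")
    case True
    then have gs: "greedy_step xs c (L, R) = (insert c L, R)" by (simp add: greedy_step_def)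
    have sc: "same xs (insert c L) R \<le> cross xs (insert c L) R"
      using cross_insL[OF cL] same_insL[OF cL Cons.prems(4)] Cons.prems(5) True by simp
    have d1: "set cs \<inter> (insert c L \<union> R) = {}" using Cons.prems(1,2) by auto
    have d2: "insert c L \<inter> R = {}" using Cons.prems(3) cL by auto
    have e: "insert c L \<union> R \<union> set cs = L \<union> R \<union> set (c # cs)" by auto
    show ?thesis using Cons.IH[of "insert c L" R] Cons.prems d1 d2 sc e gs by simp
  next
    case False
    then have gs: "greedy_step xs c (L, R) = (L, insert c R)" by (simp add: greedy_step_def)
    have sc: "same xs L (insert c R) \<le> cross xs L (insert c R)"
      using cross_insR[OF cL] same_insR[OF cL Cons.prems(4)] Cons.prems(5) False by simp
    have d1: "set cs \<inter> (L \<union> insert c R) = {}" using Cons.prems(1,2) by auto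
    have d2: "L \<inter> insert c R = {}" using Cons.prems(3) cL by auto
    have e: "L \<union> insert c R \<union> set cs = L \<union> R \<union> set (c # cs)" by auto
    show ?thesis using Cons.IH[of L "insert c R"] Cons.prems d1 d2 sc e gs by simp
  qed
qed

lemma dir_cross:
  assumes "L \<inter> R = {}"
  shows "cross xs L R = dir_cnt xs L R + dir_cnt xs R L"
proof -
  have "cross xs L R = length (filter (\<lambda>p. (\<lambda>(a, b). a \<in> L \<and> b \<in> R) p \<or> (\<lambda>(a, b). a \<in> R \<and> b \<in> L) p) (adj_pairs xs))"
    unfolding cross_def by (intro length_filter_cong') auto
  also have "\<dots> = dir_cnt xs L R + dir_cnt xs R L"
    unfolding dir_cnt_def using assms by (intro length_filter_disj) auto
  finally show ?thesis .
qed

lemma partition_props: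
  assumes "adjdiff xs" "partition_LR rk xs = (L, R)"
  shows "L \<inter> R = {} \<and> 4 * dir_cnt xs L R + 1 \<ge> length xs"
proof -
  define cs where "cs = sort_key rk (remdups xs)"
  obtain L0 R0 where f: "fold (greedy_step xs) cs ({}, {}) = (L0, R0)" by (metis surj_pair)
  have "same xs {} {} \<le> cross xs {} {}" by (simp add: same_def cross_def)
  then have inv: "L0 \<inter> R0 = {} \<and> L0 \<union> R0 = set xs \<and> same xs L0 R0 \<le> cross xs L0 R0"
    using fold_greedy[of cs "{}" "{}" xs] assms(1) f unfolding cs_def by simp
  have cov: "length (adj_pairs xs) \<le> cross xs L0 R0 + same xs L0 R0"
    unfolding cross_def same_def
  proof (intro length_filter_cover ballI)
    fix p assume p: "p \<in> set (adj_pairs xs)"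
    obtain a b where ab: "p = (a, b)" by (cases p)
    have tl: "set (tl xs) \<subseteq> set xs" by (cases xs) auto
    have "a \<in> set xs" "b \<in> set xs" using p ab tl unfolding adj_pairs_def
      by (auto dest: set_zip_leftD set_zip_rightD)
    then show "(\<lambda>(a, b). (a \<in> L0 \<and> b \<in> R0) \<or> (a \<in> R0 \<and> b \<in> L0)) p \<or>
               (\<lambda>(a, b). (a \<in> L0 \<and> b \<in> L0) \<or> (a \<in> R0 \<and> b \<in> R0)) p"
      using inv ab by auto
  qed
  have lp: "length (adj_pairs xs) = length xs - 1" unfolding adj_pairs_def by simp
  have cr: "cross xs L0 R0 = dir_cnt xs L0 R0 + dir_cnt xs R0 L0" using dir_cross inv by blast
  have pe: "partition_LR rk xs = (if dir_cnt xs L0 R0 < dir_cnt xs R0 L0 then (R0, L0) else (L0, R0))"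
    unfolding partition_LR_def using f unfolding cs_def by simp
  show ?thesis
  proof (cases "dir_cnt xs L0 R0 < dir_cnt xs R0 L0")
    case True
    then have "L = R0" "R = L0" using pe assms(2) by auto
    then show ?thesis using True inv cov lp cr by auto
  next
    case False
    then have "L = L0" "R = R0" using pe assms(2) by auto
    then show ?thesis using False inv cov lp cr by auto
  qed
qed

lemma dir_cnt_Cons_notL: "b \<notin> L \<Longrightarrow> dir_cnt (b # xs) L R = dir_cnt xs L R"
  by (cases xs) (auto simp: dir_cnt_def adj_pairs_def)

lemma dir_cnt_Cons2: "dir_cnt (a # b # xs) L R = (if a \<in> L \<and> b \<in> R then 1 else 0) + dir_cnt (b # xs) L R"
  by (simp add: dir_cnt_def adj_pairs_def)

lemma pair_replace_length:
  "L \<inter> R = {} \<Longrightarrow> length (pair_replace h L R xs) + dir_cnt xs L R = length xs"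
proof (induction h L R xs rule: pair_replace.induct)
  case (1 h L R a b xs)
  show ?case
  proof (cases "a \<in> L \<and> b \<in> R")
    case True
    then have "b \<notin> L" using "1.prems" by auto
    then show ?thesis using 1 True dir_cnt_Cons2[of a b xs L R] dir_cnt_Cons_notL[of b L xs R] by simp
  next
    case False
    have pr: "pair_replace h L R (a # b # xs) = a # pair_replace h L R (b # xs)"
      by (subst pair_replace.simps(1)) (simp only: if_not_P[OF False])
    have dc: "dir_cnt (a # b # xs) L R = dir_cnt (b # xs) L R"
      using dir_cnt_Cons2[of a b xs L R, unfolded if_not_P[OF False]] by simp
    show ?thesis using "1.IH"(2)[OF False "1.prems"] pr dc by simp
  qed
next
  case ("2_1" h L R) then show ?case by (simp add: dir_cnt_def adj_pairs_def)
next
  case ("2_2" h L R v) then show ?case by (simp add: dir_cnt_def adj_pairs_def)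
qed


fun tg :: "'a sym \<Rightarrow> nat" where
  "tg (Chr c) = 0"
| "tg (Run t x d) = Suc t"
| "tg (Pr t a b) = Suc t"

lemma adjdiff_Cons: "adjdiff (a # ys) \<longleftrightarrow> (ys = [] \<or> a \<noteq> hd ys) \<and> adjdiff ys"
  by (cases ys) (auto simp: adjdiff_def adj_pairs_def)

lemma adjdiff_Nil[simp]: "adjdiff []" by (simp add: adjdiff_def adj_pairs_def)

lemma set_run_compress: "set (run_compress h xs) \<subseteq> set xs \<union> {y. tg y = Suc h}"
proof (induction h xs rule: run_compress.induct)
  case (1 h) then show ?case by simp
next
  case (2 h x xs)
  have "set (dropWhile (\<lambda>y. y = x) xs) \<subseteq> set xs" by (rule set_dropWhileD[THEN subsetI])
  then show ?case using 2 by (auto simp: Let_def)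
qed

lemma set_pair_replace: "set (pair_replace h L R xs) \<subseteq> set xs \<union> {y. tg y = Suc h}"
  by (induction h L R xs rule: pair_replace.induct) auto

lemma hd_run_compress:
  "d \<noteq> [] \<Longrightarrow> hd (run_compress h d) = hd d \<or> (\<exists>k. hd (run_compress h d) = Run h (hd d) k)"
  by (cases d) (auto simp: Let_def)

lemma run_compress_Nil_iff: "run_compress h d = [] \<longleftrightarrow> d = []"
  by (cases d) (auto simp: Let_def)

lemma adjdiff_run_compress:
  "\<forall>x\<in>set xs. tg x \<le> h \<Longrightarrow> adjdiff (run_compress h xs)"
proof (induction h xs rule: run_compress.induct)
  case (1 h) then show ?case by simp
next
  case (2 h x xs)
  define d where "d = dropWhile (\<lambda>y. y = x) xs"
  define k where "k = length (takeWhile (\<lambda>y. y = x) xs)"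
  define l where "l = (if k = 0 then x else Run h x (Suc k))"
  have rc: "run_compress h (x # xs) = l # run_compress h d"
    unfolding l_def k_def d_def by (simp add: Let_def)
  have dsub: "set d \<subseteq> set xs" unfolding d_def by (rule set_dropWhileD[THEN subsetI])
  have ih: "adjdiff (run_compress h d)" unfolding d_def using 2 dsub unfolding d_def by auto
  have "l \<noteq> hd (run_compress h d)" if dne: "d \<noteq> []"
  proof -
    have hdd: "hd d \<noteq> x" using hd_dropWhile[of "\<lambda>y. y = x" xs] dne unfolding d_def by simp
    have "hd d \<in> set xs" using dne dsub by (meson hd_in_set subsetD)
    then have tgd: "tg (hd d) \<le> h" using 2(2) by simp
    have tgx: "tg x \<le> h" using 2(2) by simp
    from hd_run_compress[OF dne, of h] show ?thesis
    proof
      assume e: "hd (run_compress h d) = hd d"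
      show ?thesis unfolding e l_def using hdd tgd by (auto dest: arg_cong[of _ _ tg])
    next
      assume "\<exists>k'. hd (run_compress h d) = Run h (hd d) k'"
      then obtain k' where e: "hd (run_compress h d) = Run h (hd d) k'" by blast
      show ?thesis unfolding e l_def using hdd tgx by auto
    qed
  qed
  then show ?case unfolding rc adjdiff_Cons using ih run_compress_Nil_iff by blast
qed

lemma tg_level: "\<forall>x\<in>set (ttog_level rk T h). tg x \<le> h"
proof (induction h)
  case 0 then show ?case by auto
next
  case (Suc h)
  have "set (ttog_level rk T (Suc h)) \<subseteq> set (ttog_level rk T h) \<union> {y. tg y = Suc h}"
  proof (cases "even h")
    case True
    then show ?thesis by (simp add: ttog_step_def set_run_compress)
  next
    case False
    obtain L R where p: "partition_LR rk (ttog_level rk T h) = (L, R)" by (metis surj_pair)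
    then show ?thesis using False by (simp add: ttog_step_def set_pair_replace)
  qed
  then show ?case using Suc by fastforce
qed

lemma adjdiff_odd: "odd h \<Longrightarrow> adjdiff (ttog_level rk T h)"
proof -
  assume "odd h"
  then obtain h' where h': "h = Suc h'" "even h'" by (metis oddE add.commute plus_1_eq_Suc even_mult_iff even_numeral)
  then show ?thesis using adjdiff_run_compress[OF tg_level[of rk T h']] by (simp add: ttog_step_def)
qed

lemma level_step:
  assumes "valid wt (ttog_level rk T h) z b c1 c2 src"
  shows "\<exists>b' c1' c2' s'. valid wt (ttog_level rk T (Suc h)) z b' c1' c2' s' \<and>
     card (set (ttog_level rk T (Suc h)) - set (ttog_level rk T h)) + phi z b' c1' c2' \<le> phi z b c1 c2 + 7 * z"
proof (cases "even h")
  case True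
  have e: "ttog_level rk T (Suc h) = map (rg h) (rgrp (ttog_level rk T h))"
    using True by (simp add: ttog_step_def run_compress_rgrp)
  show ?thesis unfolding e by (rule grouping.family_step[OF runs_grouping assms])
next
  case False
  obtain L R where p: "partition_LR rk (ttog_level rk T h) = (L, R)" by (metis surj_pair)
  have LR: "L \<inter> R = {}" using partition_props[OF adjdiff_odd[OF False] p] by blast
  have e: "ttog_level rk T (Suc h) = map (pg h) (pgrp L R (ttog_level rk T h))"
    using False p by (simp add: ttog_step_def pair_replace_pgrp)
  show ?thesis unfolding e by (rule grouping.family_step[OF pairs_grouping[OF LR] assms])
qed

lemma level_shrink:
  "card (set (ttog_level rk T (Suc h)) - set (ttog_level rk T h)) + length (ttog_level rk T (Suc h))
     \<le> length (ttog_level rk T h)"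
proof (cases "even h")
  case True
  have e: "ttog_level rk T (Suc h) = map (rg h) (rgrp (ttog_level rk T h))"
    using True by (simp add: ttog_step_def run_compress_rgrp)
  show ?thesis unfolding e using grouping.new_shrink[OF runs_grouping] by simp
next
  case False
  obtain L R where p: "partition_LR rk (ttog_level rk T h) = (L, R)" by (metis surj_pair)
  have LR: "L \<inter> R = {}" using partition_props[OF adjdiff_odd[OF False] p] by blast
  have e: "ttog_level rk T (Suc h) = map (pg h) (pgrp L R (ttog_level rk T h))"
    using False p by (simp add: ttog_step_def pair_replace_pgrp)
  show ?thesis unfolding e using grouping.new_shrink[OF pairs_grouping[OF LR]] by simp
qed

lemma decay:
  assumes "even h"
  shows "4 * length (ttog_level rk T (Suc (Suc h))) \<le> 3 * length (ttog_level rk T h) + 1"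
proof -
  define m where "m = length (ttog_level rk T (Suc h))"
  have mle: "m \<le> length (ttog_level rk T h)" using level_shrink[of rk T h] unfolding m_def by simp
  have odd: "odd (Suc h)" using assms by simp
  obtain L R where p: "partition_LR rk (ttog_level rk T (Suc h)) = (L, R)" by (metis surj_pair)
  have pp: "L \<inter> R = {} \<and> 4 * dir_cnt (ttog_level rk T (Suc h)) L R + 1 \<ge> m"
    using partition_props[OF adjdiff_odd[OF odd] p] unfolding m_def by simp
  have e: "ttog_level rk T (Suc (Suc h)) = pair_replace (Suc h) L R (ttog_level rk T (Suc h))"
    using odd p by (simp add: ttog_step_def)
  have "length (ttog_level rk T (Suc (Suc h))) + dir_cnt (ttog_level rk T (Suc h)) L R = m"
    unfolding e m_def using pp pair_replace_length by blast
  then show ?thesis using pp mle by linarith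
qed


declare lz_count.simps[simp del]

lemma lz_count_eq: "lz_count T p = (if length T \<le> p then 0 else Suc (lz_count T (p + max 1 (lz_len T p))))"
  by (rule lz_count.simps)

lemma lz_len_props:
  assumes "p < length T"
  shows "1 \<le> lz_len T p \<and> lz_len T p \<le> length T - p \<and>
    (T ! p \<in> set (take p T) \<longrightarrow> sublist (take (lz_len T p) (drop p T)) (take p T))"
proof (cases "T ! p \<in> set (take p T)")
  case False
  then show ?thesis using assms by (simp add: lz_len_def)
next
  case True
  define P where "P = (\<lambda>l. l \<le> length T - p \<and> sublist (take l (drop p T)) (take p T))"
  have e: "lz_len T p = Greatest P" unfolding lz_len_def P_def using True by simp
  have t1: "take 1 (drop p T) = [T ! p]" using assms
    by (metis Cons_nth_drop_Suc One_nat_def take_0 take_Suc_Cons)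
  have P1: "P 1"
  proof -
    obtain us vs where "take p T = us @ T ! p # vs" using True by (metis split_list)
    then have "sublist [T ! p] (take p T)" unfolding sublist_def by (metis append.assoc append_Cons append_Nil)
    then show ?thesis unfolding P_def using t1 assms by simp
  qed
  have bd: "\<And>y. P y \<Longrightarrow> y \<le> length T - p" unfolding P_def by simp
  have "P (Greatest P)" by (rule GreatestI_nat[of P 1 "length T - p", OF P1 bd])
  moreover have "1 \<le> Greatest P" by (rule Greatest_le_nat[of P 1 "length T - p", OF P1 bd])
  ultimately show ?thesis using e True unfolding P_def by simp
qed

lemma lz_family:
  "p \<le> length T \<Longrightarrow> \<exists>b c1 c2 src. b 0 = p \<and> b (lz_count T p) = length T \<and>
     (\<forall>i < lz_count T p. b i \<le> c1 i \<and> c1 i \<le> c2 i \<and> c2 i \<le> b (Suc i) \<and> b (Suc i) \<le> length T \<and>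
        (c1 i - b i) + (b (Suc i) - c2 i) \<le> 1 \<and>
        (c1 i < c2 i \<longrightarrow> src i < c1 i \<and> src i + (c2 i - c1 i) \<le> length T \<and>
           (\<forall>t < c2 i - c1 i. T ! (src i + t) = T ! (c1 i + t))))"
proof (induction T p rule: lz_count.induct)
  case (1 T p)
  show ?case
  proof (cases "length T \<le> p")
    case True
    then have "lz_count T p = 0" by (subst lz_count_eq) simp
    then show ?thesis using True "1.prems" by (intro exI[of _ "\<lambda>_. p"]) simp
  next
    case False
    define l where "l = lz_len T p"
    have lp: "1 \<le> l" "l \<le> length T - p"
      "T ! p \<in> set (take p T) \<longrightarrow> sublist (take l (drop p T)) (take p T)"
      using lz_len_props[of p T] False unfolding l_def by auto
    have cnt: "lz_count T p = Suc (lz_count T (p + l))" using False lp by (subst lz_count_eq) (simp add: l_def max_def)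
    have "p + max 1 (lz_len T p) \<le> length T" using lp unfolding l_def by (simp add: max_def)
    from "1.IH"[OF False this] obtain b c1 c2 src where
      fam: "b 0 = p + l" "b (lz_count T (p + l)) = length T"
      "\<forall>i < lz_count T (p + l). b i \<le> c1 i \<and> c1 i \<le> c2 i \<and> c2 i \<le> b (Suc i) \<and> b (Suc i) \<le> length T \<and>
        (c1 i - b i) + (b (Suc i) - c2 i) \<le> 1 \<and>
        (c1 i < c2 i \<longrightarrow> src i < c1 i \<and> src i + (c2 i - c1 i) \<le> length T \<and>
           (\<forall>t < c2 i - c1 i. T ! (src i + t) = T ! (c1 i + t)))"
      using lp unfolding l_def by (auto simp: max_def split: if_splits)
    obtain x1 x2 s0 where first: "p \<le> x1 \<and> x1 \<le> x2 \<and> x2 \<le> p + l \<and> (x1 - p) + (p + l - x2) \<le> 1 \<and>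
        (x1 < x2 \<longrightarrow> s0 < x1 \<and> s0 + (x2 - x1) \<le> length T \<and>
           (\<forall>t < x2 - x1. T ! (s0 + t) = T ! (x1 + t)))"
    proof (cases "T ! p \<in> set (take p T)")
      case True
      then obtain us vs where uv: "take p T = us @ take l (drop p T) @ vs"
        using lp(3) unfolding sublist_def by blast
      have ltk: "length (take l (drop p T)) = l" using lp False by simp
      have lp2: "p \<le> length T" using False by simp
      have "length (take p T) = p" using lp2 by simp
      then have us: "length us + l \<le> p" using uv ltk by (metis le_add1 length_append add.assoc)
      have cp: "T ! (length us + t) = T ! (p + t)" if "t < l" for t
      proof -
        have "take p T ! (length us + t) = take l (drop p T) ! t" using uv that ltk
          by (simp add: nth_append)
        moreover have "length us + t < p" using us that by simp
        moreover have "p + t < length T" using that lp by simp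
        ultimately show ?thesis using that by simp
      qed
      show ?thesis
        apply (rule that[of p "p + l" "length us"])
        using us cp lp lp2 by auto
    next
      case False
      have "l = 1" unfolding l_def lz_len_def using False by simp
      show ?thesis
        apply (rule that[of "p + l" "p + l" 0])
        using \<open>l = 1\<close> by simp
    qed
    define b' where "b' = (\<lambda>i. if i = 0 then p else b (i - 1))"
    define c1' where "c1' = (\<lambda>i. if i = 0 then x1 else c1 (i - 1))"
    define c2' where "c2' = (\<lambda>i. if i = 0 then x2 else c2 (i - 1))"
    define src' where "src' = (\<lambda>i. if i = 0 then s0 else src (i - 1))"
    have A: "b' 0 = p" "b' (lz_count T p) = length T" using fam cnt unfolding b'_def by auto
    have B: "\<forall>i < lz_count T p. b' i \<le> c1' i \<and> c1' i \<le> c2' i \<and> c2' i \<le> b' (Suc i) \<and> b' (Suc i) \<le> length T \<and>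
        (c1' i - b' i) + (b' (Suc i) - c2' i) \<le> 1 \<and>
        (c1' i < c2' i \<longrightarrow> src' i < c1' i \<and> src' i + (c2' i - c1' i) \<le> length T \<and>
           (\<forall>t < c2' i - c1' i. T ! (src' i + t) = T ! (c1' i + t)))"
    proof (intro allI impI)
      fix i assume i: "i < lz_count T p"
      show "b' i \<le> c1' i \<and> c1' i \<le> c2' i \<and> c2' i \<le> b' (Suc i) \<and> b' (Suc i) \<le> length T \<and>
        (c1' i - b' i) + (b' (Suc i) - c2' i) \<le> 1 \<and>
        (c1' i < c2' i \<longrightarrow> src' i < c1' i \<and> src' i + (c2' i - c1' i) \<le> length T \<and>
           (\<forall>t < c2' i - c1' i. T ! (src' i + t) = T ! (c1' i + t)))"
      proof (cases i)
        case 0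
        have "p + l \<le> length T" using lp False by simp
        then show ?thesis using first fam(1) 0 unfolding b'_def c1'_def c2'_def src'_def by auto
      next
        case (Suc j)
        then have jl: "j < lz_count T (p + l)" using i cnt by simp
        have eqs: "b' i = b j" "b' (Suc i) = b (Suc j)" "c1' i = c1 j" "c2' i = c2 j" "src' i = src j"
          using Suc unfolding b'_def c1'_def c2'_def src'_def by simp_all
        show ?thesis unfolding eqs by (rule fam(3)[rule_format, OF jl])
      qed
    qed
    show ?thesis using A B by blast
  qed
qed

lemma lz_count_le: "lz_count T p \<le> length T - p"
proof (induction T p rule: lz_count.induct)
  case (1 T p)
  show ?case
  proof (cases "length T \<le> p")
    case True then show ?thesis by (subst lz_count_eq) simp
  next
    case False
    then have "lz_count T p = Suc (lz_count T (p + max 1 (lz_len T p)))" by (subst lz_count_eq) simp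
    then show ?thesis using "1.IH"[OF False] False by simp
  qed
qed

lemma lz_count_pos: "p < length T \<Longrightarrow> 1 \<le> lz_count T p"
  by (subst lz_count_eq) simp

lemma elen_map_Chr: "elen wt (take k (map Chr T)) = min k (length T)"
proof -
  have "elen wt (map Chr xs) = length xs" for xs :: "'a list"
    by (induction xs) (auto simp: elen_def)
  then show ?thesis by (simp add: take_map)
qed

lemma level0_family:
  "\<exists>b c1 c2 src. valid wt (ttog_level rk T 0) (lz77_size T) b c1 c2 src \<and> phi (lz77_size T) b c1 c2 \<le> lz77_size T"
proof -
  define z where "z = lz77_size T"
  from lz_family[of 0 T] obtain b c1 c2 src where fam: "b 0 = 0" "b z = length T"
    "\<forall>i < z. b i \<le> c1 i \<and> c1 i \<le> c2 i \<and> c2 i \<le> b (Suc i) \<and> b (Suc i) \<le> length T \<and>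
        (c1 i - b i) + (b (Suc i) - c2 i) \<le> 1 \<and>
        (c1 i < c2 i \<longrightarrow> src i < c1 i \<and> src i + (c2 i - c1 i) \<le> length T \<and>
           (\<forall>t < c2 i - c1 i. T ! (src i + t) = T ! (c1 i + t)))"
    unfolding z_def lz77_size_def by auto
  have vi: "b i \<le> c1 i \<and> c1 i \<le> c2 i \<and> c2 i \<le> b (Suc i) \<and>
        (c1 i < c2 i \<longrightarrow> elen wt (take (src i) (map Chr T)) < elen wt (take (c1 i) (map Chr T)) \<and>
           src i + (c2 i - c1 i) \<le> length (map Chr T) \<and>
           (\<forall>t < c2 i - c1 i. map Chr T ! (src i + t) = map Chr T ! (c1 i + t)))" if i: "i < z" for i
  proof -
    note f = fam(3)[rule_format, OF i]
    have o: "b i \<le> c1 i" "c1 i \<le> c2 i" "c2 i \<le> b (Suc i)" using f by auto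
    have cc: "elen wt (take (src i) (map Chr T)) < elen wt (take (c1 i) (map Chr T)) \<and>
           src i + (c2 i - c1 i) \<le> length (map Chr T) \<and>
           (\<forall>t < c2 i - c1 i. map Chr T ! (src i + t) = map Chr T ! (c1 i + t))" if lt: "c1 i < c2 i"
    proof -
      have c: "src i < c1 i" "src i + (c2 i - c1 i) \<le> length T" "c1 i \<le> length T"
        "\<forall>t < c2 i - c1 i. T ! (src i + t) = T ! (c1 i + t)" using f lt by auto
      have e1: "elen wt (take (src i) (map Chr T)) < elen wt (take (c1 i) (map Chr T))"
        using c by (simp add: elen_map_Chr)
      have e2: "\<forall>t < c2 i - c1 i. map Chr T ! (src i + t) = map Chr T ! (c1 i + t)"
      proof (intro allI impI)
        fix t assume t: "t < c2 i - c1 i"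
        have "src i + t < length T" "c1 i + t < length T" using c t f by auto
        then show "map Chr T ! (src i + t) = map Chr T ! (c1 i + t)" using c(4) t by simp
      qed
      show ?thesis using e1 e2 c by simp
    qed
    show ?thesis using o cc by blast
  qed
  have v: "valid wt (map Chr T) z b c1 c2 src"
    unfolding valid_def using vi fam(1,2) by simp
  have "phi z b c1 c2 \<le> (\<Sum>i<z. 1)" unfolding phi_def using fam(3) by (intro sum_mono) auto
  then show ?thesis using v unfolding z_def by auto
qed


definition UU :: "('a sym \<Rightarrow> nat) \<Rightarrow> 'a list \<Rightarrow> nat \<Rightarrow> 'a sym set" where
  "UU rk T h = (\<Union>m\<in>{..h}. set (ttog_level rk T m))"

lemma UU_Suc: "UU rk T (Suc h) = UU rk T h \<union> (set (ttog_level rk T (Suc h)) - set (ttog_level rk T h))"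
proof -
  have "set (ttog_level rk T h) \<subseteq> UU rk T h" unfolding UU_def by auto
  moreover have "UU rk T (Suc h) = UU rk T h \<union> set (ttog_level rk T (Suc h))"
    unfolding UU_def by (simp add: atMost_Suc Un_commute)
  ultimately show ?thesis by blast
qed

lemma finite_UU: "finite (UU rk T h)" unfolding UU_def by simp

lemma card_UU_Suc:
  "card (UU rk T (Suc h)) \<le> card (UU rk T h) + card (set (ttog_level rk T (Suc h)) - set (ttog_level rk T h))"
  unfolding UU_Suc by (rule card_Un_le)

lemma U_bound1:
  "\<exists>b c1 c2 src. valid wt (ttog_level rk T h) (lz77_size T) b c1 c2 src \<and>
     card (UU rk T h) + phi (lz77_size T) b c1 c2 \<le> 2 * lz77_size T + 7 * lz77_size T * h"
proof (induction h)
  case 0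
  from level0_family[of rk T] obtain b c1 c2 src where
    f: "valid wt (ttog_level rk T 0) (lz77_size T) b c1 c2 src" "phi (lz77_size T) b c1 c2 \<le> lz77_size T"
    by blast
  have "UU rk T 0 = set (ttog_level rk T 0)" unfolding UU_def by simp
  then have "card (UU rk T 0) \<le> phi (lz77_size T) b c1 c2" using card_set_le_phi[OF f(1)] by simp
  then show ?case using f by (intro exI[of _ b] exI[of _ c1] exI[of _ c2] exI[of _ src]) simp
next
  case (Suc h)
  then obtain b c1 c2 src where f: "valid wt (ttog_level rk T h) (lz77_size T) b c1 c2 src"
    "card (UU rk T h) + phi (lz77_size T) b c1 c2 \<le> 2 * lz77_size T + 7 * lz77_size T * h" by blast
  from level_step[OF f(1)] obtain b' c1' c2' s' where
    g: "valid wt (ttog_level rk T (Suc h)) (lz77_size T) b' c1' c2' s'"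
     "card (set (ttog_level rk T (Suc h)) - set (ttog_level rk T h)) + phi (lz77_size T) b' c1' c2'
        \<le> phi (lz77_size T) b c1 c2 + 7 * lz77_size T" by blast
  have "card (UU rk T (Suc h)) + phi (lz77_size T) b' c1' c2' \<le> 2 * lz77_size T + 7 * lz77_size T * Suc h"
    using card_UU_Suc[of rk T h] f(2) g(2) by simp
  then show ?case using g(1) by blast
qed

lemma U_bound1': "card (UU rk T h) \<le> 2 * lz77_size T + 7 * lz77_size T * h"
  using U_bound1[of rk T h] by fastforce

lemma U_shrink:
  assumes "h0 \<le> h"
  shows "card (UU rk T h) + length (ttog_level rk T h) \<le> card (UU rk T h0) + length (ttog_level rk T h0)"
  using assms
proof (induction h rule: dec_induct)
  case base then show ?case by simp
next
  case (step h)
  have "card (UU rk T (Suc h)) + length (ttog_level rk T (Suc h))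
      \<le> card (UU rk T h) + card (set (ttog_level rk T (Suc h)) - set (ttog_level rk T h)) + length (ttog_level rk T (Suc h))"
    using card_UU_Suc[of rk T h] by simp
  also have "\<dots> \<le> card (UU rk T h) + length (ttog_level rk T h)" using level_shrink[of rk T h] by simp
  finally show ?case using step by simp
qed

lemma len_decay: "real (length (ttog_level rk T (2 * k))) \<le> 1 + (3/4)^k * real (length T)"
proof (induction k)
  case 0 then show ?case by simp
next
  case (Suc k)
  have e: "2 * Suc k = Suc (Suc (2 * k))" by simp
  have n: "4 * length (ttog_level rk T (Suc (Suc (2 * k)))) \<le> 3 * length (ttog_level rk T (2 * k)) + 1"
    by (rule decay) simp
  define a where "a = length (ttog_level rk T (2 * Suc k))"
  define c where "c = length (ttog_level rk T (2 * k))"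
  have n': "4 * a \<le> 3 * c + 1" using n unfolding a_def c_def e .
  have "real (4 * a) \<le> real (3 * c + 1)" using n' by (rule of_nat_mono)
  then have r: "4 * real a \<le> 3 * real c + 1" by simp
  have ih: "real c \<le> 1 + (3/4)^k * real (length T)" using Suc unfolding c_def .
  have p: "(3/4::real)^(Suc k) * real (length T) = 3/4 * ((3/4)^k * real (length T))" by simp
  show ?case unfolding a_def[symmetric] using r ih p by linarith
qed

lemma U_bound_all:
  "card (UU rk T h) \<le> 2 * lz77_size T + 7 * lz77_size T * h0 + length (ttog_level rk T h0)"
proof (cases "h \<le> h0")
  case True
  have "card (UU rk T h) \<le> 2 * lz77_size T + 7 * lz77_size T * h" by (rule U_bound1')
  also have "\<dots> \<le> 2 * lz77_size T + 7 * lz77_size T * h0" using True by simp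
  finally show ?thesis by simp
next
  case False
  then have "card (UU rk T h) + length (ttog_level rk T h) \<le> card (UU rk T h0) + length (ttog_level rk T h0)"
    by (intro U_shrink) simp
  then show ?thesis using U_bound1'[of rk T h0] by simp
qed

lemma letters_bound:
  "card (ttog_letters rk T) \<le> 2 * lz77_size T + 7 * lz77_size T * h0 + length (ttog_level rk T h0)"
proof (cases "finite (ttog_letters rk T)")
  case False then show ?thesis by simp
next
  case True
  have "\<forall>x\<in>ttog_letters rk T. \<exists>h. x \<in> set (ttog_level rk T h)" unfolding ttog_letters_def by blast
  then obtain H where H: "\<forall>x\<in>ttog_letters rk T. x \<in> set (ttog_level rk T (H x))" by metis
  define M where "M = Max (H ` ttog_letters rk T)"
  have "ttog_letters rk T \<subseteq> UU rk T M"
  proof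
    fix x assume x: "x \<in> ttog_letters rk T"
    then have "H x \<le> M" unfolding M_def using True by simp
    then show "x \<in> UU rk T M" using H x unfolding UU_def by blast
  qed
  then have "card (ttog_letters rk T) \<le> card (UU rk T M)" by (intro card_mono finite_UU)
  then show ?thesis using U_bound_all[of rk T M h0] by simp
qed

lemma lz_size_props: "T \<noteq> [] \<Longrightarrow> 1 \<le> lz77_size T \<and> lz77_size T \<le> length T"
  using lz_count_pos[of 0 T] lz_count_le[of T 0] unfolding lz77_size_def by simp

theorem lemma14:
  "\<exists>C::real. \<forall>(T::nat list) (rk::nat sym \<Rightarrow> nat).
     inj rk \<longrightarrow> T \<noteq> [] \<longrightarrow>
     real (card (ttog_letters rk T))
       \<le> C * real (lz77_size T) * (1 + log 2 (real (length T) / real (lz77_size T)))"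
proof (intro exI[of _ 46] allI impI)
  fix T :: "nat list" and rk :: "nat sym \<Rightarrow> nat"
  assume "T \<noteq> []"
  define z where "z = lz77_size T"
  define N where "N = length T"
  have zN: "1 \<le> z" "z \<le> N" using lz_size_props[OF \<open>T \<noteq> []\<close>] unfolding z_def N_def by auto
  define q where "q = real N / real z"
  have q1: "1 \<le> q" unfolding q_def using zN by simp
  define L where "L = log 2 q"
  have L0: "0 \<le> L" unfolding L_def using q1 by simp
  define j where "j = nat \<lceil>L\<rceil>"
  have jL: "L \<le> real j" "real j \<le> L + 1" unfolding j_def using L0 by linarith+
  have pj: "q \<le> 2 ^ j"
  proof -
    have "log 2 q \<le> real j" using jL unfolding L_def by simp
    then have "q \<le> 2 powr real j" using q1 by (subst log_le_iff[symmetric]) auto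
    then show ?thesis by (simp add: powr_realpow)
  qed
  define k where "k = 3 * j"
  have "(3/4::real)^k = ((3/4)^3)^j" unfolding k_def by (simp add: power_mult)
  also have "\<dots> \<le> (1/2)^j"
  proof (rule power_mono)
    show "(3/4::real)^3 \<le> 1/2" by (simp add: eval_nat_numeral)
  qed simp
  finally have k1: "(3/4::real)^k \<le> (1/2)^j" .
  have "(1/2::real)^j * real N \<le> real z"
  proof -
    have "real N = q * real z" unfolding q_def using zN by simp
    also have "\<dots> \<le> 2 ^ j * real z" using pj by (intro mult_right_mono) auto
    finally have "real N \<le> 2 ^ j * real z" .
    then show ?thesis by (simp add: field_simps)
  qed
  then have "(3/4::real)^k * real N \<le> real z"
    using k1 by (meson mult_right_mono of_nat_0_le_iff order_trans)
  then have lenb: "real (length (ttog_level rk T (2 * k))) \<le> 1 + real z"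
    using len_decay[of rk T k] unfolding N_def by simp
  have c0: "card (ttog_letters rk T) \<le> 2 * z + 7 * z * (2 * k) + length (ttog_level rk T (2 * k))"
    using letters_bound[of rk T "2 * k"] unfolding z_def .
  have "real (card (ttog_letters rk T)) \<le> real (2 * z + 7 * z * (2 * k) + length (ttog_level rk T (2 * k)))"
    using c0 by (rule of_nat_mono)
  also have "\<dots> = 2 * real z + 14 * real z * real k + real (length (ttog_level rk T (2 * k)))"
    by simp
  also have "\<dots> \<le> 2 * real z + 14 * real z * real k + (1 + real z)"
    using lenb by linarith
  also have "\<dots> \<le> 4 * real z + 42 * real z * real j"
    unfolding k_def using zN by simp
  also have "\<dots> \<le> 4 * real z + 42 * real z * (L + 1)"
    using jL zN by (intro add_left_mono mult_left_mono) auto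
  also have "\<dots> = 46 * real z + 42 * real z * L" by (simp add: algebra_simps)
  also have "\<dots> \<le> 46 * real z * (1 + L)" using L0 zN by (simp add: algebra_simps)
  finally show "real (card (ttog_letters rk T))
       \<le> 46 * real (lz77_size T) * (1 + log 2 (real (length T) / real (lz77_size T)))"
    unfolding z_def N_def L_def q_def by simp
qed


end
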